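(* Let $G$ be a simple undirected graph, $X\subseteq V(G)$, $\mathbb{H}$ an $X$-net of $G$, and $C$ a $V_1V_2$-chunk of $\mathbb{H}$. Then applying merge$(C)$ to $\mathbb{H}$ yields an $X$-net of $G$.
   Context: For $U,V\subseteq V(G)$, a $UV$-path is a single vertex of $U\cap V$ or a path with one end in $U$ and the other in $V$; a $UV$-rung is a vertex-minimal induced $UV$-path. For a multigraph $\mathbb{H}$, $\nabla(\mathbb{H})$ adds an edge between each pair of leaves of $\mathbb{H}$. An $X$-net is a finite loopless multigraph $\mathbb{H}$ whose nodes and arcs are subsets of $X$ such that: (N1) $\mathbb{H}$ is connected and $\nabla(\mathbb{H})$ biconnected; (N2) the arcs are nonempty, pairwise disjoint, and partition $X$; (N3) $\mathbb{H}$ has exactly three leaf nodes, each a single leaf (degree-one) vertex of $G$; (N4) for each arc $E$ with end-nodes $U,V$, every vertex of $E$ lies on a $UV$-rung of $G[E]$; (N5) for arc $E$ and node $V$, $E\cap V\ne\emptyset$ iff $V$ is an end-node of $E$; (N6) for $u,v\in X$ in distinct arcs $E,F$, $uv\in E(G)$ iff $E,F$ have a common end-node $V$ with $\{u,v\}\subseteq V$. A split component of $\mathbb{H}$ is either an arc with end-nodes $U,V$ (split pair $\{U,V\}$), or, for nodes $\{U,V\}$ forming a cutset of $\nabla(\mathbb{H})$, a subgraph of $\mathbb{H}$ containing $U,V$ that is a maximal subgraph of $\nabla(\mathbb{H})$ in which $U,V$ are nonadjacent and do not form a cutset (split pair $\{U,V\}$). A $V_1V_2$-chunk is a union of the arcs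 of one or more split components all having split pair $\{V_1,V_2\}$. merge$(C)$ replaces all arcs of $\mathbb{H}$ intersecting $C$ by one arc with end-nodes $V_1,V_2$ equal to $C$ and deletes nodes all of whose incident arcs were deleted. *)

theory Defs
  imports Main
begin

definition simple_graph :: "'a set \<Rightarrow> ('a \<Rightarrow> 'a \<Rightarrow> bool) \<Rightarrow> bool" where
  "simple_graph Vg Eg \<longleftrightarrow> finite Vg \<and>
     (\<forall>u v. Eg u v \<longrightarrow> u \<in> Vg \<and> v \<in> Vg \<and> u \<noteq> v \<and> Eg v u)"

definition g_leaf :: "('a \<Rightarrow> 'a \<Rightarrow> bool) \<Rightarrow> 'a \<Rightarrow> bool" where
  "g_leaf Eg v \<longleftrightarrow> card {u. Eg v u} = 1"

definition is_path :: "('a \<Rightarrow> 'a \<Rightarrow> bool) \<Rightarrow> 'a list \<Rightarrow> bool" where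
  "is_path Eg P \<longleftrightarrow> P \<noteq> [] \<and> distinct P \<and>
     (\<forall>i. Suc i < length P \<longrightarrow> Eg (P ! i) (P ! Suc i))"

definition is_induced_path :: "('a \<Rightarrow> 'a \<Rightarrow> bool) \<Rightarrow> 'a list \<Rightarrow> bool" where
  "is_induced_path Eg P \<longleftrightarrow> is_path Eg P \<and>
     (\<forall>i j. i < length P \<and> j < length P \<and> Eg (P ! i) (P ! j) \<longrightarrow> j = Suc i \<or> i = Suc j)"

text \<open>A UV-path in the induced subgraph G[S] (a one-vertex list is a vertex of U \<inter> V).\<close>
definition uv_path :: "('a \<Rightarrow> 'a \<Rightarrow> bool) \<Rightarrow> 'a set \<Rightarrow> 'a set \<Rightarrow> 'a set \<Rightarrow> 'a list \<Rightarrow> bool" where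
  "uv_path Eg S U V P \<longleftrightarrow> is_path Eg P \<and> set P \<subseteq> S \<and> hd P \<in> U \<and> last P \<in> V"

definition uv_rung :: "('a \<Rightarrow> 'a \<Rightarrow> bool) \<Rightarrow> 'a set \<Rightarrow> 'a set \<Rightarrow> 'a set \<Rightarrow> 'a list \<Rightarrow> bool" where
  "uv_rung Eg S U V P \<longleftrightarrow> uv_path Eg S U V P \<and> is_induced_path Eg P \<and>
     \<not> (\<exists>Q. uv_path Eg S U V Q \<and> is_induced_path Eg Q \<and> set Q \<subset> set P)"

record 'a mgraph =
  nodes :: "'a set set"
  arcs :: "'a set set"
  ends :: "'a set \<Rightarrow> 'a set set"

definition madj :: "'n set \<Rightarrow> 'e set \<Rightarrow> ('e \<Rightarrow> 'n set) \<Rightarrow> 'n \<Rightarrow> 'n \<Rightarrow> bool" where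
  "madj N Ed f a b \<longleftrightarrow> a \<in> N \<and> b \<in> N \<and> a \<noteq> b \<and> (\<exists>e\<in>Ed. f e = {a, b})"

definition mconnected :: "'n set \<Rightarrow> 'e set \<Rightarrow> ('e \<Rightarrow> 'n set) \<Rightarrow> bool" where
  "mconnected N Ed f \<longleftrightarrow> (\<forall>a\<in>N. \<forall>b\<in>N. (madj N Ed f)\<^sup>*\<^sup>* a b)"

definition mbiconnected :: "'n set \<Rightarrow> 'e set \<Rightarrow> ('e \<Rightarrow> 'n set) \<Rightarrow> bool" where
  "mbiconnected N Ed f \<longleftrightarrow> mconnected N Ed f \<and> (\<forall>v\<in>N. mconnected (N - {v}) Ed f)"

definition mdegree :: "'a mgraph \<Rightarrow> 'a set \<Rightarrow> nat" where
  "mdegree H V = card {E \<in> arcs H. V \<in> ends H E}"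

definition leaf_nodes :: "'a mgraph \<Rightarrow> 'a set set" where
  "leaf_nodes H = {V \<in> nodes H. mdegree H V = 1}"

text \<open>Edges of nabla(H): the arcs of H plus one new edge per pair of distinct leaves.\<close>
datatype 'a nabla_edge = ArcE "'a set" | LeafE "'a set set"

definition nabla_edges :: "'a mgraph \<Rightarrow> 'a nabla_edge set" where
  "nabla_edges H = ArcE ` arcs H \<union>
     {LeafE {L1, L2} | L1 L2. L1 \<in> leaf_nodes H \<and> L2 \<in> leaf_nodes H \<and> L1 \<noteq> L2}"

fun nabla_ends :: "'a mgraph \<Rightarrow> 'a nabla_edge \<Rightarrow> 'a set set" where
  "nabla_ends H (ArcE E) = ends H E"
| "nabla_ends H (LeafE p) = p"

definition is_net :: "('a \<Rightarrow> 'a \<Rightarrow> bool) \<Rightarrow> 'a set \<Rightarrow> 'a mgraph \<Rightarrow> bool" where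
  "is_net Eg X H \<longleftrightarrow>
     \<comment> \<open>finite loopless multigraph whose nodes and arcs are subsets of X\<close>
     finite (nodes H) \<and> finite (arcs H) \<and>
     (\<forall>V\<in>nodes H. V \<subseteq> X) \<and> (\<forall>E\<in>arcs H. E \<subseteq> X) \<and>
     (\<forall>E\<in>arcs H. ends H E \<subseteq> nodes H \<and> card (ends H E) = 2) \<and>
     \<comment> \<open>(N1)\<close>
     mconnected (nodes H) (arcs H) (ends H) \<and>
     mbiconnected (nodes H) (nabla_edges H) (nabla_ends H) \<and>
     \<comment> \<open>(N2)\<close>
     (\<forall>E\<in>arcs H. E \<noteq> {}) \<and>
     (\<forall>E\<in>arcs H. \<forall>F\<in>arcs H. E \<noteq> F \<longrightarrow> E \<inter> F = {}) \<and>
     \<Union>(arcs H) = X \<and>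
     \<comment> \<open>(N3)\<close>
     card (leaf_nodes H) = 3 \<and>
     (\<forall>L\<in>leaf_nodes H. \<exists>v. L = {v} \<and> g_leaf Eg v) \<and>
     \<comment> \<open>(N4)\<close>
     (\<forall>E\<in>arcs H. \<forall>U V. ends H E = {U, V} \<longrightarrow>
        (\<forall>x\<in>E. \<exists>P. uv_rung Eg E U V P \<and> x \<in> set P)) \<and>
     \<comment> \<open>(N5)\<close>
     (\<forall>E\<in>arcs H. \<forall>V\<in>nodes H. E \<inter> V \<noteq> {} \<longleftrightarrow> V \<in> ends H E) \<and>
     \<comment> \<open>(N6)\<close>
     (\<forall>E\<in>arcs H. \<forall>F\<in>arcs H. \<forall>u v. E \<noteq> F \<and> u \<in> E \<and> v \<in> F \<longrightarrow>
        (Eg u v \<longleftrightarrow> (\<exists>V \<in> ends H E \<inter> ends H F. u \<in> V \<and> v \<in> V)))"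

definition nabla_subgraph :: "'a mgraph \<Rightarrow> 'a set set \<Rightarrow> 'a nabla_edge set \<Rightarrow> bool" where
  "nabla_subgraph H N' Ed' \<longleftrightarrow> N' \<subseteq> nodes H \<and> Ed' \<subseteq> nabla_edges H \<and>
     (\<forall>e\<in>Ed'. nabla_ends H e \<subseteq> N')"

text \<open>U, V belong to the subgraph, are nonadjacent in it, and do not form a cutset of it.\<close>
definition sc_prop :: "'a mgraph \<Rightarrow> 'a set \<Rightarrow> 'a set \<Rightarrow> 'a set set \<Rightarrow> 'a nabla_edge set \<Rightarrow> bool" where
  "sc_prop H U V N' Ed' \<longleftrightarrow> U \<in> N' \<and> V \<in> N' \<and>
     \<not> (\<exists>e\<in>Ed'. nabla_ends H e = {U, V}) \<and>
     mconnected (N' - {U, V}) Ed' (nabla_ends H)"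

definition is_cutpair :: "'a mgraph \<Rightarrow> 'a set \<Rightarrow> 'a set \<Rightarrow> bool" where
  "is_cutpair H U V \<longleftrightarrow> U \<in> nodes H \<and> V \<in> nodes H \<and> U \<noteq> V \<and>
     \<not> mconnected (nodes H - {U, V}) (nabla_edges H) (nabla_ends H)"

definition split_component :: "'a mgraph \<Rightarrow> 'a set set \<Rightarrow> 'a set set \<Rightarrow> bool" where
  "split_component H A P \<longleftrightarrow>
     (\<exists>E\<in>arcs H. A = {E} \<and> P = ends H E) \<or>
     (\<exists>U V N' Ed'. P = {U, V} \<and> is_cutpair H U V \<and>
        nabla_subgraph H N' Ed' \<and> Ed' \<subseteq> ArcE ` arcs H \<and> sc_prop H U V N' Ed' \<and>
        (\<forall>N'' Ed''. nabla_subgraph H N'' Ed'' \<and> sc_prop H U V N'' Ed'' \<and>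
            N' \<subseteq> N'' \<and> Ed' \<subseteq> Ed'' \<longrightarrow> N'' = N' \<and> Ed'' = Ed') \<and>
        A = {E. ArcE E \<in> Ed'})"

definition is_chunk :: "'a mgraph \<Rightarrow> 'a set \<Rightarrow> 'a set \<Rightarrow> 'a set \<Rightarrow> bool" where
  "is_chunk H V1 V2 C \<longleftrightarrow>
     (\<exists>S. S \<noteq> {} \<and> (\<forall>A\<in>S. split_component H A {V1, V2}) \<and> C = \<Union>(\<Union>S))"

definition merge :: "'a mgraph \<Rightarrow> 'a set \<Rightarrow> 'a set \<Rightarrow> 'a set \<Rightarrow> 'a mgraph" where
  "merge H V1 V2 C =
     \<lparr> nodes = {V \<in> nodes H. V = V1 \<or> V = V2 \<or> (\<exists>E\<in>arcs H. E \<inter> C = {} \<and> V \<in> ends H E)},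
       arcs = {E \<in> arcs H. E \<inter> C = {}} \<union> {C},
       ends = (\<lambda>E. if E = C then {V1, V2} else ends H E) \<rparr>"

end

theory Submission
  imports Defs
begin

lemma is_path_succ: "is_path R P \<longleftrightarrow> P \<noteq> [] \<and> distinct P \<and> successively R P"
  by (auto simp: is_path_def successively_conv_nth)

lemma is_path_rev:
  assumes "is_path R P" "\<And>x y. R x y \<Longrightarrow> R y x"
  shows "is_path R (rev P)"
  using assms unfolding is_path_succ by (auto elim: successively_mono)

lemma is_path_append:
  assumes "is_path R P" "is_path R Q" "set P \<inter> set Q = {}" "R (last P) (hd Q)"
  shows "is_path R (P @ Q)"
  using assms unfolding is_path_succ by (auto simp: successively_append_iff)

lemma is_path_append_D:
  assumes "is_path R (P @ Q)" "P \<noteq> []"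
  shows "is_path R P"
  using assms unfolding is_path_succ by (auto simp: successively_append_iff)

lemma is_path_append_D2:
  assumes "is_path R (P @ Q)" "Q \<noteq> []"
  shows "is_path R Q"
  using assms unfolding is_path_succ by (auto simp: successively_append_iff)

lemma is_path_Cons:
  "is_path R (a # P) \<longleftrightarrow> (P = [] \<or> (is_path R P \<and> R a (hd P))) \<and> a \<notin> set P"
  unfolding is_path_succ by (auto simp: successively_Cons)

lemma is_path_mono:
  assumes "is_path R P" "\<And>x y. x \<in> set P \<Longrightarrow> y \<in> set P \<Longrightarrow> R x y \<Longrightarrow> S x y"
  shows "is_path S P"
proof -
  have "successively R P" using assms(1) by (simp add: is_path_succ)
  hence "successively S P" using assms(2) successively_mono[of R P S] by blast
  thus ?thesis using assms(1) by (simp add: is_path_succ)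
qed

lemma is_path_splice:
  assumes "is_path R Q" "is_path R P" "last Q = hd P" "set Q \<inter> set P = {hd P}"
  shows "is_path R (Q @ tl P)"
proof -
  have Qne: "Q \<noteq> []" using assms(1) by (simp add: is_path_def)
  obtain p ps where P: "P = p # ps" using assms(2) by (cases P) (auto simp: is_path_def)
  show ?thesis
  proof (cases "ps = []")
    case True
    then show ?thesis using Qne by (simp add: P assms(1))
  next
    case False
    have "is_path R ps" and "R p (hd ps)" and "p \<notin> set ps"
      using assms(2) False by (simp_all add: P is_path_Cons)
    moreover have "set Q \<inter> set ps = {}" using assms(4) \<open>p \<notin> set ps\<close> P by auto
    ultimately show ?thesis using assms Qne P by (intro is_path_append) auto
  qed
qed

lemma induced_def2:
  "is_induced_path Eg P \<longleftrightarrow> is_path Eg P \<and>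
     (\<forall>i j. i < length P \<longrightarrow> j < length P \<longrightarrow> Eg (P ! i) (P ! j) \<longrightarrow> j = Suc i \<or> i = Suc j)"
  by (auto simp: is_induced_path_def)

lemma induced_adj:
  "is_induced_path Eg P \<Longrightarrow> i < length P \<Longrightarrow> j < length P \<Longrightarrow> Eg (P ! i) (P ! j) \<Longrightarrow> j = Suc i \<or> i = Suc j"
  by (simp add: is_induced_path_def)

lemma induced_path: "is_induced_path Eg P \<Longrightarrow> is_path Eg P"
  by (simp add: is_induced_path_def)

lemma induced_take:
  assumes "is_induced_path Eg P" "0 < k"
  shows "is_induced_path Eg (take k P)"
proof -
  have Pne: "P \<noteq> []" using induced_path[OF assms(1)] by (simp add: is_path_def)
  have "is_path Eg (take k P @ drop k P)" using induced_path[OF assms(1)] by simp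
  hence "is_path Eg (take k P)" using Pne assms(2) is_path_append_D[of Eg "take k P" "drop k P"] by auto
  moreover have "\<forall>i j. i < length (take k P) \<longrightarrow> j < length (take k P) \<longrightarrow>
      Eg (take k P ! i) (take k P ! j) \<longrightarrow> j = Suc i \<or> i = Suc j"
    using induced_adj[OF assms(1)] by simp
  ultimately show ?thesis by (simp add: induced_def2)
qed

lemma induced_drop:
  assumes "is_induced_path Eg P" "k < length P"
  shows "is_induced_path Eg (drop k P)"
proof -
  have "is_path Eg (take k P @ drop k P)" using induced_path[OF assms(1)] by simp
  hence "is_path Eg (drop k P)" using assms(2) is_path_append_D2[of Eg "take k P" "drop k P"] by auto
  moreover have "\<forall>i j. i < length (drop k P) \<longrightarrow> j < length (drop k P) \<longrightarrow>
      Eg (drop k P ! i) (drop k P ! j) \<longrightarrow> j = Suc i \<or> i = Suc j"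
  proof (intro allI impI)
    fix i j assume "i < length (drop k P)" "j < length (drop k P)" "Eg (drop k P ! i) (drop k P ! j)"
    hence "k + j = Suc (k + i) \<or> k + i = Suc (k + j)"
      using induced_adj[OF assms(1), of "k + i" "k + j"] by simp
    thus "j = Suc i \<or> i = Suc j" by auto
  qed
  ultimately show ?thesis by (simp add: induced_def2)
qed

lemma induced_rev:
  assumes "is_induced_path Eg P" "\<And>x y. Eg x y \<Longrightarrow> Eg y x"
  shows "is_induced_path Eg (rev P)"
proof -
  have "is_path Eg (rev P)" using assms is_path_rev induced_path by blast
  moreover have "\<forall>i j. i < length (rev P) \<longrightarrow> j < length (rev P) \<longrightarrow>
      Eg (rev P ! i) (rev P ! j) \<longrightarrow> j = Suc i \<or> i = Suc j"
  proof (intro allI impI)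
    fix i j assume a: "i < length (rev P)" "j < length (rev P)" "Eg (rev P ! i) (rev P ! j)"
    hence "Eg (P ! (length P - Suc i)) (P ! (length P - Suc j))" by (simp add: rev_nth)
    hence "length P - Suc j = Suc (length P - Suc i) \<or> length P - Suc i = Suc (length P - Suc j)"
      using induced_adj[OF assms(1)] a by simp
    thus "j = Suc i \<or> i = Suc j" using a by auto
  qed
  ultimately show ?thesis by (simp add: induced_def2)
qed

lemma distinct_nth_eq: "distinct P \<Longrightarrow> i < length P \<Longrightarrow> j < length P \<Longrightarrow> P ! i = P ! j \<Longrightarrow> i = j"
  using nth_eq_iff_index_eq by blast

lemma induced_append:
  assumes "is_induced_path Eg P" "is_induced_path Eg R" "set P \<inter> set R = {}"
    "Eg (last P) (hd R)"
    "\<And>u v. u \<in> set P \<Longrightarrow> v \<in> set R \<Longrightarrow> Eg u v \<or> Eg v u \<Longrightarrow> u = last P \<and> v = hd R"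
  shows "is_induced_path Eg (P @ R)"
proof -
  have Pne: "P \<noteq> []" and Rne: "R \<noteq> []" using induced_path[OF assms(1)] induced_path[OF assms(2)] by (auto simp: is_path_def)
  have "is_path Eg (P @ R)" using assms(1-4) induced_path is_path_append by blast
  moreover have "\<forall>i j. i < length (P @ R) \<longrightarrow> j < length (P @ R) \<longrightarrow>
      Eg ((P @ R) ! i) ((P @ R) ! j) \<longrightarrow> j = Suc i \<or> i = Suc j"
  proof (intro allI impI)
    fix i j assume a: "i < length (P @ R)" "j < length (P @ R)" "Eg ((P @ R) ! i) ((P @ R) ! j)"
    have lastP: "last P = P ! (length P - 1)" using Pne by (simp add: last_conv_nth)
    have hdR: "hd R = R ! 0" using Rne by (simp add: hd_conv_nth)
    have dP: "distinct P" and dR: "distinct R" using induced_path[OF assms(1)] induced_path[OF assms(2)] by (auto simp: is_path_def)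
    have lP: "length P - 1 < length P" using Pne by simp
    have lR: "0 < length R" using Rne by simp
    have key: "k = length P - 1 \<and> l = length P"
      if k: "k < length P" and l: "length P \<le> l" "l < length P + length R"
        and e: "Eg (P ! k) (R ! (l - length P)) \<or> Eg (R ! (l - length P)) (P ! k)" for k l
    proof -
      have "P ! k = last P \<and> R ! (l - length P) = hd R"
        using assms(5)[of "P ! k" "R ! (l - length P)"] k l e by auto
      hence "P ! k = P ! (length P - 1)" "R ! (l - length P) = R ! 0" using lastP hdR by auto
      moreover have "l - length P < length R" using l by arith
      ultimately have "k = length P - 1" "l - length P = 0"
        using distinct_nth_eq[OF dP k lP] distinct_nth_eq[OF dR _ lR] by blast+
      thus ?thesis using l by auto
    qed
    show "j = Suc i \<or> i = Suc j"
    proof (cases "i < length P")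
      case i: True
      show ?thesis
      proof (cases "j < length P")
        case True
        have "Eg (P ! i) (P ! j)" using a i True by (simp add: nth_append)
        then show ?thesis using i True induced_adj[OF assms(1), of i j] by blast
      next
        case False
        have e: "Eg (P ! i) (R ! (j - length P))" using a i False by (simp add: nth_append)
        have "j < length P + length R" using a by simp
        hence "i = length P - 1 \<and> j = length P"
          using key[of i j] e i False by simp
        then show ?thesis using Pne by auto
      qed
    next
      case i: False
      show ?thesis
      proof (cases "j < length P")
        case True
        have e: "Eg (R ! (i - length P)) (P ! j)" using a i True by (simp add: nth_append)
        have "i < length P + length R" using a by simp
        hence "j = length P - 1 \<and> i = length P"
          using key[of j i] e i True by simp
        then show ?thesis using Pne by auto
      next
        case False
        have "Eg (R ! (i - length P)) (R ! (j - length P))" using a i False by (simp add: nth_append)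
        hence "j - length P = Suc (i - length P) \<or> i - length P = Suc (j - length P)"
          using induced_adj[OF assms(2), of "i - length P" "j - length P"] a i False by auto
        then show ?thesis using i False by auto
      qed
    qed
  qed
  ultimately show ?thesis by (simp add: induced_def2)
qed

lemma rung_last_only:
  assumes "uv_rung Eg S U V P" "y \<in> set P" "y \<in> V"
  shows "y = last P"
proof (rule ccontr)
  assume ne: "y \<noteq> last P"
  have ind: "is_induced_path Eg P" and up: "uv_path Eg S U V P" using assms(1) by (auto simp: uv_rung_def)
  have pth: "is_path Eg P" using ind induced_path by blast
  have Pne: "P \<noteq> []" and dP: "distinct P" using pth by (auto simp: is_path_def)
  obtain p where p: "p < length P" "P ! p = y" using assms(2) by (auto simp: in_set_conv_nth)
  have lastP: "last P = P ! (length P - 1)" using Pne by (simp add: last_conv_nth)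
  have pl: "p < length P - 1" using p ne lastP by (metis diff_Suc_1 less_SucE Suc_pred' length_greater_0_conv Pne)
  define Q where "Q = take (Suc p) P"
  have indQ: "is_induced_path Eg Q" unfolding Q_def using induced_take[OF ind] by simp
  have hdQ: "hd Q = hd P" unfolding Q_def using Pne by simp
  have lastQ: "last Q = y" unfolding Q_def using p by (simp add: take_Suc_conv_app_nth)
  have sQ: "set Q \<subseteq> set P" unfolding Q_def by (rule set_take_subset)
  have "last P \<notin> set Q"
  proof
    assume "last P \<in> set Q"
    then obtain i where i: "i < length Q" "Q ! i = last P" by (auto simp: in_set_conv_nth)
    have "i < Suc p" "P ! i = P ! (length P - 1)" using i p lastP unfolding Q_def by auto
    hence "i = length P - 1" using distinct_nth_eq[OF dP, of i "length P - 1"] pl by simp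
    thus False using \<open>i < Suc p\<close> pl by simp
  qed
  hence "set Q \<subset> set P" using sQ Pne by auto
  moreover have "uv_path Eg S U V Q" using up indQ induced_path[OF indQ] hdQ lastQ sQ assms(3)
    by (auto simp: uv_path_def)
  ultimately show False using assms(1) indQ by (auto simp: uv_rung_def)
qed

lemma rung_hd_only:
  assumes "uv_rung Eg S U V P" "y \<in> set P" "y \<in> U"
  shows "y = hd P"
proof (rule ccontr)
  assume ne: "y \<noteq> hd P"
  have ind: "is_induced_path Eg P" and up: "uv_path Eg S U V P" using assms(1) by (auto simp: uv_rung_def)
  have pth: "is_path Eg P" using ind induced_path by blast
  have Pne: "P \<noteq> []" and dP: "distinct P" using pth by (auto simp: is_path_def)
  obtain p where p: "p < length P" "P ! p = y" using assms(2) by (auto simp: in_set_conv_nth)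
  have hdP: "hd P = P ! 0" using Pne by (simp add: hd_conv_nth)
  have pl: "0 < p" using p ne hdP by (cases p) auto
  define Q where "Q = drop p P"
  have indQ: "is_induced_path Eg Q" unfolding Q_def using induced_drop[OF ind p(1)] by simp
  have hdQ: "hd Q = y" unfolding Q_def using p by (simp add: hd_drop_conv_nth)
  have lastQ: "last Q = last P" unfolding Q_def using p by simp
  have sQ: "set Q \<subseteq> set P" unfolding Q_def by (rule set_drop_subset)
  have "hd P \<notin> set Q"
  proof
    assume "hd P \<in> set Q"
    then obtain i where i: "i < length Q" "Q ! i = hd P" by (auto simp: in_set_conv_nth)
    have "p + i < length P" "P ! (p + i) = P ! 0" using i p hdP unfolding Q_def by auto
    hence "p + i = 0" using distinct_nth_eq[OF dP, of "p + i" 0] Pne by simp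
    thus False using pl by simp
  qed
  hence "set Q \<subset> set P" using sQ Pne by (metis hd_in_set psubsetI)
  moreover have "uv_path Eg S U V Q" using up indQ induced_path[OF indQ] hdQ lastQ sQ assms(3)
    by (auto simp: uv_path_def)
  ultimately show False using assms(1) indQ by (auto simp: uv_rung_def)
qed

lemma path_covers:
  assumes ind: "is_induced_path Eg P"
    and onlyU: "\<forall>y\<in>set P. y \<in> U \<longrightarrow> y = hd P"
    and onlyV: "\<forall>y\<in>set P. y \<in> V \<longrightarrow> y = last P"
    and Q: "is_path Eg Q" "set Q \<subseteq> set P" "hd Q \<in> U" "last Q \<in> V"
  shows "set P \<subseteq> set Q"
proof -
  have pth: "is_path Eg P" using ind induced_path by blast
  have Pne: "P \<noteq> []" and dP: "distinct P" using pth by (auto simp: is_path_def)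
  have Qne: "Q \<noteq> []" using Q by (auto simp: is_path_def)
  have "\<forall>t. \<exists>i. t < length Q \<longrightarrow> i < length P \<and> P ! i = Q ! t"
    using Q(2) by (metis in_set_conv_nth nth_mem subsetD)
  then obtain f where f: "\<And>t. t < length Q \<Longrightarrow> f t < length P \<and> P ! (f t) = Q ! t" by metis
  have hdP: "hd P = P ! 0" using Pne by (simp add: hd_conv_nth)
  have lastP: "last P = P ! (length P - 1)" using Pne by (simp add: last_conv_nth)
  have f0: "f 0 = 0"
  proof -
    have q0: "0 < length Q" using Qne by simp
    have "Q ! 0 \<in> U" using Q(3) Qne by (simp add: hd_conv_nth)
    hence zU: "P ! (f 0) \<in> U" using f[OF q0] by simp
    have zP: "P ! (f 0) \<in> set P" using f[OF q0] nth_mem by blast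
    have "P ! (f 0) = hd P" using bspec[OF onlyU zP] zU by (rule mp)
    hence "P ! (f 0) = P ! 0" using hdP by simp
    moreover have "0 < length P" using Pne by simp
    ultimately show ?thesis using distinct_nth_eq[OF dP, of "f 0" 0] f[OF q0] by blast
  qed
  have fl: "f (length Q - 1) = length P - 1"
  proof -
    have lq: "length Q - 1 < length Q" using Qne by simp
    have "Q ! (length Q - 1) \<in> V" using Q(4) Qne by (simp add: last_conv_nth)
    hence zV: "P ! (f (length Q - 1)) \<in> V" using f[OF lq] by simp
    have zP: "P ! (f (length Q - 1)) \<in> set P" using f[OF lq] nth_mem by blast
    have "P ! (f (length Q - 1)) = last P" using bspec[OF onlyV zP] zV by (rule mp)
    hence "P ! (f (length Q - 1)) = P ! (length P - 1)" using lastP by simp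
    moreover have "length P - 1 < length P" using Pne by simp
    ultimately show ?thesis using distinct_nth_eq[OF dP, of "f (length Q - 1)" "length P - 1"] f[OF lq] by blast
  qed
  have step: "f (Suc t) \<le> Suc (f t)" if t: "Suc t < length Q" for t
  proof -
    have "Eg (Q ! t) (Q ! Suc t)" using Q(1) t by (simp add: is_path_def)
    hence "Eg (P ! f t) (P ! f (Suc t))" using f[of t] f[of "Suc t"] t by simp
    hence "f (Suc t) = Suc (f t) \<or> f t = Suc (f (Suc t))"
      using induced_adj[OF ind, of "f t" "f (Suc t)"] f[of t] f[of "Suc t"] t by simp
    thus ?thesis by auto
  qed
  have ivt: "\<forall>v \<le> f n. \<exists>t \<le> n. f t = v" if "n < length Q" for n
    using that
  proof (induction n)
    case 0 then show ?case using f0 by auto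
  next
    case (Suc n)
    show ?case
    proof (intro allI impI)
      fix v assume v: "v \<le> f (Suc n)"
      show "\<exists>t\<le>Suc n. f t = v"
      proof (cases "v \<le> f n")
        case True then show ?thesis using Suc by (meson Suc_lessD le_Suc_eq)
      next
        case False
        hence "v = f (Suc n)" using v step[OF Suc.prems] by simp
        then show ?thesis by auto
      qed
    qed
  qed
  show ?thesis
  proof
    fix y assume "y \<in> set P"
    then obtain v where v: "v < length P" "P ! v = y" by (auto simp: in_set_conv_nth)
    have "v \<le> f (length Q - 1)" using fl v by simp
    then obtain t where "t \<le> length Q - 1" "f t = v" using ivt[of "length Q - 1"] Qne by auto
    moreover have "t < length Q" using \<open>t \<le> length Q - 1\<close> Qne by (cases Q) auto
    ultimately have "t < length Q" "Q ! t = y" using f[of t] v by auto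
    thus "y \<in> set Q" by (metis nth_mem)
  qed
qed

lemma rung_intro:
  assumes ind: "is_induced_path Eg P" and "set P \<subseteq> S" "hd P \<in> U" "last P \<in> V"
    and onlyU: "\<forall>y\<in>set P. y \<in> U \<longrightarrow> y = hd P"
    and onlyV: "\<forall>y\<in>set P. y \<in> V \<longrightarrow> y = last P"
  shows "uv_rung Eg S U V P"
proof -
  have "uv_path Eg S U V P" using assms induced_path by (auto simp: uv_path_def)
  moreover have "\<not> (set Q \<subset> set P)" if "uv_path Eg S U V Q" for Q
    using path_covers[OF ind onlyU onlyV, of Q] that by (auto simp: uv_path_def)
  ultimately show ?thesis using ind by (auto simp: uv_rung_def)
qed

lemma rung_rev:
  assumes "uv_rung Eg S U V P" "\<And>x y. Eg x y \<Longrightarrow> Eg y x"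
  shows "uv_rung Eg S V U (rev P)"
proof -
  have ind: "is_induced_path Eg P" and up: "uv_path Eg S U V P" using assms(1) by (auto simp: uv_rung_def)
  have Pne: "P \<noteq> []" using up by (auto simp: uv_path_def is_path_def)
  show ?thesis
  proof (rule rung_intro)
    show "is_induced_path Eg (rev P)" using induced_rev[OF ind] assms(2) by blast
    show "set (rev P) \<subseteq> S" "hd (rev P) \<in> V" "last (rev P) \<in> U"
      using up Pne by (auto simp: uv_path_def hd_rev last_rev)
    show "\<forall>y\<in>set (rev P). y \<in> V \<longrightarrow> y = hd (rev P)"
      using rung_last_only[OF assms(1)] Pne by (simp add: hd_rev)
    show "\<forall>y\<in>set (rev P). y \<in> U \<longrightarrow> y = last (rev P)"
      using rung_hd_only[OF assms(1)] Pne by (simp add: last_rev)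
  qed
qed

lemma madj_mono:
  "madj N Ed f x y \<Longrightarrow> N \<subseteq> N2 \<Longrightarrow> Ed \<subseteq> Ed2 \<Longrightarrow> madj N2 Ed2 f x y"
  by (auto simp: madj_def)

lemma madj_rtc_mono:
  assumes "(madj N Ed f)\<^sup>*\<^sup>* x y" "N \<subseteq> N2" "Ed \<subseteq> Ed2"
  shows "(madj N2 Ed2 f)\<^sup>*\<^sup>* x y"
  using assms(1) by (induction rule: rtranclp_induct)
    (auto intro: rtranclp.rtrancl_into_rtrancl madj_mono[OF _ assms(2,3)])

lemma madj_sym: "madj N Ed f x y \<Longrightarrow> madj N Ed f y x"
  by (auto simp: madj_def insert_commute)

lemma mconnected_mono_E:
  "mconnected N Ed f \<Longrightarrow> Ed \<subseteq> Ed2 \<Longrightarrow> mconnected N Ed2 f"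
  unfolding mconnected_def using madj_rtc_mono[of N Ed f _ _ N Ed2] by blast

lemma mconnected_insert:
  assumes "mconnected N Ed f" "Z \<in> N" "e \<in> Ed" "f e = {Z, Y}"
  shows "mconnected (insert Y N) Ed f"
proof (cases "Y \<in> N")
  case True then show ?thesis using assms(1) by (simp add: insert_absorb)
next
  case False
  have YZ: "madj (insert Y N) Ed f Y Z" using assms False by (auto simp: madj_def insert_commute)
  have lift: "(madj (insert Y N) Ed f)\<^sup>*\<^sup>* a b" if "a \<in> N" "b \<in> N" for a b
    using assms(1) that madj_rtc_mono[of N Ed f a b "insert Y N" Ed] unfolding mconnected_def by blast
  show ?thesis unfolding mconnected_def
  proof (intro ballI)
    fix a b assume a: "a \<in> insert Y N" and b: "b \<in> insert Y N"
    show "(madj (insert Y N) Ed f)\<^sup>*\<^sup>* a b"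
    proof (cases "a = Y")
      case aY: True
      show ?thesis
      proof (cases "b = Y")
        case True then show ?thesis using aY by simp
      next
        case False
        hence "b \<in> N" using b by simp
        then show ?thesis using aY YZ lift[OF assms(2)] by (meson converse_rtranclp_into_rtranclp)
      qed
    next
      case aN: False
      hence aN': "a \<in> N" using a by simp
      show ?thesis
      proof (cases "b = Y")
        case True then show ?thesis using lift[OF aN' assms(2)] madj_sym[OF YZ]
          by (meson rtranclp.rtrancl_into_rtrancl)
      next
        case False
        hence "b \<in> N" using b by simp
        then show ?thesis using lift[OF aN'] by blast
      qed
    qed
  qed
qed

lemma partition_edge:
  assumes "mconnected N Ed f" "a \<in> N" "a \<in> A" "b \<in> N" "b \<notin> A"
  shows "\<exists>e\<in>Ed. \<exists>x y. x \<in> N \<and> x \<in> A \<and> y \<in> N \<and> y \<notin> A \<and> f e = {x, y}"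
proof (rule ccontr)
  assume no: "\<not> ?thesis"
  have "(madj N Ed f)\<^sup>*\<^sup>* a b" using assms unfolding mconnected_def by blast
  hence "b \<in> A"
  proof (induction rule: rtranclp_induct)
    case base then show ?case using assms(3) .
  next
    case (step y z)
    then show ?case using no by (auto simp: madj_def)
  qed
  thus False using assms(5) by simp
qed

lemma conn_map:
  assumes "(madj N1 E1 f1)\<^sup>*\<^sup>* a b"
    "\<And>x y. madj N1 E1 f1 x y \<Longrightarrow> \<phi> x = \<phi> y \<or> madj N2 E2 f2 (\<phi> x) (\<phi> y)"
  shows "(madj N2 E2 f2)\<^sup>*\<^sup>* (\<phi> a) (\<phi> b)"
  using assms(1)
proof (induction rule: rtranclp_induct)
  case base then show ?case by simp
next
  case (step y z)
  then show ?case using assms(2)[OF step(2)] by (metis rtranclp.rtrancl_into_rtrancl)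
qed

lemma path_in_N:
  assumes "is_path (madj N Ed f) Q" "hd Q \<in> N"
  shows "set Q \<subseteq> N"
proof
  fix y assume "y \<in> set Q"
  then obtain i where i: "i < length Q" "Q ! i = y" by (auto simp: in_set_conv_nth)
  show "y \<in> N"
  proof (cases i)
    case 0 then show ?thesis using i assms(2) by (cases Q) auto
  next
    case (Suc k)
    hence "madj N Ed f (Q ! k) (Q ! Suc k)" using assms(1) i unfolding is_path_def by blast
    then show ?thesis using i Suc by (simp add: madj_def)
  qed
qed

lemma first_hit:
  assumes "(madj N Ed f)\<^sup>*\<^sup>* u t" "t \<in> T" "u \<notin> T"
  shows "\<exists>Q. is_path (madj N Ed f) Q \<and> hd Q = u \<and> last Q \<in> T \<and> (\<forall>y\<in>set (butlast Q). y \<notin> T)"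
  using assms
proof (induction rule: converse_rtranclp_induct)
  case base then show ?case by simp
next
  case (step u u')
  show ?case
  proof (cases "u' \<in> T")
    case True
    have "u \<noteq> u'" using step(1) by (simp add: madj_def)
    hence "is_path (madj N Ed f) [u, u']" using step(1) by (simp add: is_path_Cons)
    then show ?thesis using True step(5) by (intro exI[of _ "[u, u']"]) auto
  next
    case False
    then obtain Q' where Q': "is_path (madj N Ed f) Q'" "hd Q' = u'" "last Q' \<in> T"
      "\<forall>y\<in>set (butlast Q'). y \<notin> T" using step by blast
    have Q'ne: "Q' \<noteq> []" using Q' by (simp add: is_path_def)
    show ?thesis
    proof (cases "u \<in> set Q'")
      case True
      obtain ys zs where split: "Q' = ys @ (u # zs)" using split_list[OF True] by blast
      have "is_path (madj N Ed f) (u # zs)" using Q'(1) split by (metis is_path_append_D2 list.distinct(1))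
      moreover have "hd (u # zs) = u" by simp
      moreover have "last (u # zs) = last Q'" using split by simp
      moreover have "set (butlast (u # zs)) \<subseteq> set (butlast Q')"
        using split by (simp add: butlast_append)
      ultimately show ?thesis using Q' by (intro exI[of _ "u # zs"]) (metis subsetD)
    next
      case False
      have "is_path (madj N Ed f) (u # Q')" using Q' Q'ne step(1) False by (simp add: is_path_Cons)
      moreover have "set (butlast (u # Q')) \<subseteq> insert u (set (butlast Q'))" using Q'ne by simp
      ultimately show ?thesis using Q' Q'ne step(5) by (intro exI[of _ "u # Q'"]) auto
    qed
  qed
qed

definition ARel :: "'a mgraph \<Rightarrow> 'a set set \<Rightarrow> 'a set \<Rightarrow> 'a set \<Rightarrow> bool" where
  "ARel H A x y \<longleftrightarrow> (\<exists>F\<in>A. ends H F = {x, y})"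

lemma ARel_sym: "ARel H A x y \<Longrightarrow> ARel H A y x"
  by (auto simp: ARel_def insert_commute)

lemma ARel_mono: "ARel H A x y \<Longrightarrow> A \<subseteq> B \<Longrightarrow> ARel H B x y"
  by (auto simp: ARel_def)

lemma net_D1: assumes "is_net Eg X H" shows "finite (nodes H)"
  using assms unfolding is_net_def by (elim conjE) assumption

lemma net_D2: assumes "is_net Eg X H" shows "finite (arcs H)"
  using assms unfolding is_net_def by (elim conjE) assumption

lemma net_D3: assumes "is_net Eg X H" shows "\<forall>V\<in>nodes H. V \<subseteq> X"
  using assms unfolding is_net_def by (elim conjE) assumption

lemma net_D4: assumes "is_net Eg X H" shows "\<forall>E\<in>arcs H. E \<subseteq> X"
  using assms unfolding is_net_def by (elim conjE) assumption

lemma net_D5: assumes "is_net Eg X H" shows "\<forall>E\<in>arcs H. ends H E \<subseteq> nodes H \<and> card (ends H E) = 2"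
  using assms unfolding is_net_def by (elim conjE) assumption

lemma net_D6: assumes "is_net Eg X H" shows "mconnected (nodes H) (arcs H) (ends H)"
  using assms unfolding is_net_def by (elim conjE) assumption

lemma net_D7: assumes "is_net Eg X H" shows "mbiconnected (nodes H) (nabla_edges H) (nabla_ends H)"
  using assms unfolding is_net_def by (elim conjE) assumption

lemma net_D8: assumes "is_net Eg X H" shows "\<forall>E\<in>arcs H. E \<noteq> {}"
  using assms unfolding is_net_def by (elim conjE) assumption

lemma net_D9: assumes "is_net Eg X H" shows "\<forall>E\<in>arcs H. \<forall>F\<in>arcs H. E \<noteq> F \<longrightarrow> E \<inter> F = {}"
  using assms unfolding is_net_def by (elim conjE) assumption

lemma net_D10: assumes "is_net Eg X H" shows "\<Union>(arcs H) = X"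
  using assms unfolding is_net_def by (elim conjE) assumption

lemma net_D11: assumes "is_net Eg X H" shows "card (leaf_nodes H) = 3"
  using assms unfolding is_net_def by (elim conjE) assumption

lemma net_D12: assumes "is_net Eg X H" shows "\<forall>L\<in>leaf_nodes H. \<exists>v. L = {v} \<and> g_leaf Eg v"
  using assms unfolding is_net_def by (elim conjE) assumption

lemma net_D13: assumes "is_net Eg X H" shows "\<forall>E\<in>arcs H. \<forall>U V. ends H E = {U, V} \<longrightarrow> (\<forall>x\<in>E. \<exists>P. uv_rung Eg E U V P \<and> x \<in> set P)"
  using assms unfolding is_net_def by (elim conjE) assumption

lemma net_D14: assumes "is_net Eg X H" shows "\<forall>E\<in>arcs H. \<forall>V\<in>nodes H. E \<inter> V \<noteq> {} \<longleftrightarrow> V \<in> ends H E"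
  using assms unfolding is_net_def by (elim conjE) assumption

lemma net_D15: assumes "is_net Eg X H" shows "\<forall>E\<in>arcs H. \<forall>F\<in>arcs H. \<forall>u v. E \<noteq> F \<and> u \<in> E \<and> v \<in> F \<longrightarrow>
        (Eg u v \<longleftrightarrow> (\<exists>V \<in> ends H E \<inter> ends H F. u \<in> V \<and> v \<in> V))"
  using assms unfolding is_net_def by (elim conjE) assumption

lemma net_ends: "is_net Eg X H \<Longrightarrow> E \<in> arcs H \<Longrightarrow> ends H E \<subseteq> nodes H \<and> card (ends H E) = 2"
  using net_D5 by (rule bspec)
lemma net_arc_ne: "is_net Eg X H \<Longrightarrow> E \<in> arcs H \<Longrightarrow> E \<noteq> {}"
  using net_D8 by (rule bspec)
lemma net_disj: assumes "is_net Eg X H" "E \<in> arcs H" "F \<in> arcs H" "E \<noteq> F" shows "E \<inter> F = {}"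
  using bspec[OF bspec[OF net_D9[OF assms(1)] assms(2)] assms(3)] assms(4) by (rule mp)
lemma net_N4: assumes "is_net Eg X H" "E \<in> arcs H" "ends H E = {U, V}" "x \<in> E"
  shows "\<exists>P. uv_rung Eg E U V P \<and> x \<in> set P"
  using bspec[OF mp[OF spec[OF spec[OF bspec[OF net_D13[OF assms(1)] assms(2)], of U], of V] assms(3)] assms(4)] .
lemma net_N5: assumes "is_net Eg X H" "E \<in> arcs H" "V \<in> nodes H" shows "(E \<inter> V \<noteq> {} \<longleftrightarrow> V \<in> ends H E)"
  using bspec[OF bspec[OF net_D14[OF assms(1)] assms(2)] assms(3)] .
lemma net_N6: assumes "is_net Eg X H" "E \<in> arcs H" "F \<in> arcs H" "E \<noteq> F" "u \<in> E" "v \<in> F"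
  shows "(Eg u v \<longleftrightarrow> (\<exists>V \<in> ends H E \<inter> ends H F. u \<in> V \<and> v \<in> V))"
  using mp[OF spec[OF spec[OF bspec[OF bspec[OF net_D15[OF assms(1)] assms(2)] assms(3)], of u], of v]] assms(4-6)
  by blast

lemma two_set_eq:
  assumes "{a, b} = {c, d}" "a \<noteq> b"
  shows "(a = c \<and> b = d) \<or> (a = d \<and> b = c)"
  using assms by (metis doubleton_eq_iff)

lemma rung_through:
  assumes net: "is_net Eg X H" and sym: "\<And>x y. Eg x y \<Longrightarrow> Eg y x"
    and AS: "AS \<subseteq> arcs H" and Ws: "is_path (ARel H AS) Ws" and len: "Suc j < length Ws"
    and E0: "E0 \<in> AS" "ends H E0 = {Ws ! j, Ws ! Suc j}" and x: "x \<in> E0"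
  shows "\<exists>P. uv_rung Eg (\<Union>AS) (hd Ws) (last Ws) P \<and> x \<in> set P"
proof -
  define m where "m = length Ws - 1"
  have Wne: "Ws \<noteq> []" and dW: "distinct Ws" using Ws by (auto simp: is_path_def)
  have jm: "j < m" using len m_def by simp
  have m1: "1 \<le> m" using jm by simp
  have lenW: "length Ws = Suc m" using m_def Wne by simp
  have adj: "ARel H AS (Ws ! i) (Ws ! Suc i)" if "i < m" for i
    using Ws that lenW unfolding is_path_def by auto
  define ar where "ar i = (if i = j then E0 else (SOME F. F \<in> AS \<and> ends H F = {Ws ! i, Ws ! Suc i}))" for i
  have ar: "ar i \<in> AS \<and> ends H (ar i) = {Ws ! i, Ws ! Suc i}" if "i < m" for i
  proof (cases "i = j")
    case True then show ?thesis using E0 ar_def by simp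
  next
    case False
    have "\<exists>F. F \<in> AS \<and> ends H F = {Ws ! i, Ws ! Suc i}" using adj[OF that] by (auto simp: ARel_def)
    hence "(SOME F. F \<in> AS \<and> ends H F = {Ws ! i, Ws ! Suc i}) \<in> AS \<and>
       ends H (SOME F. F \<in> AS \<and> ends H F = {Ws ! i, Ws ! Suc i}) = {Ws ! i, Ws ! Suc i}"
      by (rule someI_ex)
    then show ?thesis using False unfolding ar_def by simp
  qed
  have arH: "ar i \<in> arcs H" if "i < m" for i using ar[OF that] AS by blast
  have Wnode: "Ws ! l \<in> nodes H" if "l \<le> m" for l
  proof (cases "l < m")
    case True then show ?thesis using ar[OF True] net_ends[OF net arH[OF True]] by auto
  next
    case False
    hence "l = Suc (m - 1)" using that m1 by simp
    then show ?thesis using ar[of "m - 1"] net_ends[OF net arH[of "m - 1"]] m1 by auto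
  qed
  have Weq: "Ws ! l = Ws ! l' \<Longrightarrow> l \<le> m \<Longrightarrow> l' \<le> m \<Longrightarrow> l = l'" for l l'
    using distinct_nth_eq[OF dW, of l l'] lenW by simp
  have meet: "l = i \<or> l = Suc i" if "i < m" "l \<le> m" "ar i \<inter> Ws ! l \<noteq> {}" for i l
  proof -
    have "Ws ! l \<in> ends H (ar i)" using net_N5[OF net arH[OF that(1)] Wnode[OF that(2)]] that(3) by simp
    hence "Ws ! l = Ws ! i \<or> Ws ! l = Ws ! Suc i" using ar[OF that(1)] by simp
    thus ?thesis using Weq that by auto
  qed
  have ar_ne: "ar i \<noteq> ar i'" if "i < m" "i' < m" "i \<noteq> i'" for i i'
  proof
    assume "ar i = ar i'"
    hence "{Ws ! i, Ws ! Suc i} = {Ws ! i', Ws ! Suc i'}" using ar that by metis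
    moreover have "Ws ! i \<noteq> Ws ! Suc i" using Weq[of i "Suc i"] that by auto
    ultimately have "(Ws ! i = Ws ! i' \<and> Ws ! Suc i = Ws ! Suc i') \<or> (Ws ! i = Ws ! Suc i' \<and> Ws ! Suc i = Ws ! i')"
      using two_set_eq by metis
    thus False using Weq[of i i'] Weq[of "Suc i" "Suc i'"] Weq[of i "Suc i'"] Weq[of "Suc i" i'] that by auto
  qed
  have ar_disj: "ar i \<inter> ar i' = {}" if "i < m" "i' < m" "i \<noteq> i'" for i i'
    using net_disj[OF net arH[OF that(1)] arH[OF that(2)] ar_ne[OF that]] .
  define pt where "pt i = (if i = j then x else (SOME y. y \<in> ar i))" for i
  have pt: "pt i \<in> ar i" if "i < m" for i
  proof (cases "i = j")
    case True then show ?thesis using x ar_def pt_def by simp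
  next
    case False
    have "ar i \<noteq> {}" using net_arc_ne[OF net arH[OF that]] .
    then show ?thesis using False unfolding pt_def by (simp add: some_in_eq)
  qed
  define R where "R i = (SOME P. uv_rung Eg (ar i) (Ws ! i) (Ws ! Suc i) P \<and> pt i \<in> set P)" for i
  have R: "uv_rung Eg (ar i) (Ws ! i) (Ws ! Suc i) (R i) \<and> pt i \<in> set (R i)" if "i < m" for i
  proof -
    have "\<exists>P. uv_rung Eg (ar i) (Ws ! i) (Ws ! Suc i) P \<and> pt i \<in> set P"
      using net_N4[OF net arH[OF that] conjunct2[OF ar[OF that]] pt[OF that]] .
    then show ?thesis unfolding R_def by (rule someI_ex)
  qed
  have Rind: "is_induced_path Eg (R i)" and Rsub: "set (R i) \<subseteq> ar i"
    and Rhd: "hd (R i) \<in> Ws ! i" and Rlast: "last (R i) \<in> Ws ! Suc i" and Rne: "R i \<noteq> []"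
    if "i < m" for i
    using R[OF that] by (auto simp: uv_rung_def uv_path_def is_path_def)
  define PP where "PP k = concat (map R [0..<k])" for k
  define Inv where "Inv k \<longleftrightarrow> is_induced_path Eg (PP k) \<and> set (PP k) \<subseteq> \<Union>(ar ` {..<k}) \<and>
     hd (PP k) \<in> Ws ! 0 \<and> last (PP k) \<in> Ws ! k \<and>
     (\<forall>y\<in>set (PP k). y \<in> Ws ! k \<longrightarrow> y = last (PP k)) \<and>
     (\<forall>y\<in>set (PP k). y \<in> Ws ! 0 \<longrightarrow> y = hd (PP k)) \<and>
     (\<forall>i<k. set (R i) \<subseteq> set (PP k))" for k
  have inv: "Inv (Suc k)" if "Suc k \<le> m" for k
    using that
  proof (induction k)
    case 0
    have PP1: "PP (Suc 0) = R 0" unfolding PP_def by simp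
    have z: "0 < m" using 0 by simp
    show ?case unfolding Inv_def PP1
      using Rind[OF z] Rsub[OF z] Rhd[OF z] Rlast[OF z]
        rung_last_only[of Eg "ar 0" "Ws ! 0" "Ws ! Suc 0" "R 0"]
        rung_hd_only[of Eg "ar 0" "Ws ! 0" "Ws ! Suc 0" "R 0"] R[OF z]
      by auto
  next
    case (Suc k)
    have km: "Suc k < m" using Suc.prems by simp
    have IH: "Inv (Suc k)" using Suc.IH km by simp
    let ?P = "PP (Suc k)"
    let ?R = "R (Suc k)"
    have PPs: "PP (Suc (Suc k)) = ?P @ ?R" unfolding PP_def by simp
    have Pind: "is_induced_path Eg ?P" and Psub: "set ?P \<subseteq> \<Union>(ar ` {..<Suc k})"
      and Phd: "hd ?P \<in> Ws ! 0" and Plast: "last ?P \<in> Ws ! Suc k"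
      and Ponly: "\<forall>y\<in>set ?P. y \<in> Ws ! Suc k \<longrightarrow> y = last ?P"
      and Ponly0: "\<forall>y\<in>set ?P. y \<in> Ws ! 0 \<longrightarrow> y = hd ?P"
      and PR: "\<forall>i<Suc k. set (R i) \<subseteq> set ?P"
      using IH unfolding Inv_def by blast+
    have Pne: "?P \<noteq> []" using Pind induced_path by (auto simp: is_path_def)
    have inP: "\<exists>i<Suc k. y \<in> ar i" if "y \<in> set ?P" for y using Psub that by auto
    have disj: "set ?P \<inter> set ?R = {}"
    proof -
      have "y \<notin> set ?R" if yP: "y \<in> set ?P" for y
      proof
        assume "y \<in> set ?R"
        hence "y \<in> ar (Suc k)" using Rsub[OF km] by auto
        moreover obtain i where "i < Suc k" "y \<in> ar i" using inP[OF yP] by blast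
        ultimately show False using ar_disj[of i "Suc k"] km by auto
      qed
      thus ?thesis by blast
    qed
    have cross: "u \<in> Ws ! Suc k \<and> v \<in> Ws ! Suc k" if uvh: "u \<in> set ?P" "v \<in> set ?R" "Eg u v" for u v
    proof -
      obtain i where i: "i < Suc k" "u \<in> ar i" using inP[OF uvh(1)] by blast
      have v: "v \<in> ar (Suc k)" using Rsub[OF km] uvh(2) by auto
      have im: "i < m" using i km by simp
      obtain V where V: "V \<in> ends H (ar i) \<inter> ends H (ar (Suc k))" "u \<in> V" "v \<in> V"
        using net_N6[OF net arH[OF im] arH[OF km] ar_ne[OF im km] i(2) v] uvh(3) i(1) by auto
      have "V = Ws ! i \<or> V = Ws ! Suc i" "V = Ws ! Suc k \<or> V = Ws ! Suc (Suc k)"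
        using V(1) ar[OF im] ar[OF km] by auto
      hence "V = Ws ! Suc k"
        using Weq[of i "Suc k"] Weq[of i "Suc (Suc k)"] Weq[of "Suc i" "Suc (Suc k)"] i km by auto
      thus ?thesis using V by simp
    qed
    have link: "Eg (last ?P) (hd ?R)"
    proof -
      obtain i where i: "i < Suc k" "last ?P \<in> ar i" using inP[of "last ?P"] Pne by auto
      have im: "i < m" using i km by simp
      have "ar i \<inter> Ws ! Suc k \<noteq> {}" using i Plast by blast
      hence "Suc k = i \<or> Suc k = Suc i" using meet[OF im, of "Suc k"] km by simp
      hence ik: "i = k" using i by simp
      have "hd ?R \<in> ar (Suc k)" using Rsub[OF km] Rne[OF km] by auto
      moreover have "Ws ! Suc k \<in> ends H (ar i) \<inter> ends H (ar (Suc k))" using ar im km ik by simp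
      ultimately show ?thesis
        using net_N6[OF net arH[OF im] arH[OF km] ar_ne[OF im km] i(2) \<open>hd ?R \<in> ar (Suc k)\<close>] Plast Rhd[OF km] i by auto
    qed
    have ind: "is_induced_path Eg (?P @ ?R)"
    proof (rule induced_append[OF Pind Rind[OF km] disj link])
      fix u v assume uv: "u \<in> set ?P" "v \<in> set ?R" "Eg u v \<or> Eg v u"
      hence "Eg u v" using sym by blast
      hence "u \<in> Ws ! Suc k \<and> v \<in> Ws ! Suc k" using cross uv by blast
      thus "u = last ?P \<and> v = hd ?R"
        using Ponly uv rung_hd_only[of Eg "ar (Suc k)" "Ws ! Suc k" "Ws ! Suc (Suc k)" ?R] R[OF km]
        by blast
    qed
    have onlyl: "y = last ?R" if yh: "y \<in> set (?P @ ?R)" "y \<in> Ws ! Suc (Suc k)" for y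
    proof (cases "y \<in> set ?P")
      case True
      then obtain i where i: "i < Suc k" "y \<in> ar i" using inP by blast
      have "ar i \<inter> Ws ! Suc (Suc k) \<noteq> {}" using i yh by blast
      hence "Suc (Suc k) = i \<or> Suc (Suc k) = Suc i" using meet[of i "Suc (Suc k)"] i km by simp
      then show ?thesis using i by simp
    next
      case False
      hence "y \<in> set ?R" using yh by simp
      then show ?thesis using rung_last_only[of Eg "ar (Suc k)" "Ws ! Suc k" "Ws ! Suc (Suc k)" ?R y]
        R[OF km] yh by blast
    qed
    have only0: "y = hd ?P" if "y \<in> set (?P @ ?R)" "y \<in> Ws ! 0" for y
    proof (cases "y \<in> set ?P")
      case True then show ?thesis using Ponly0 that by blast
    next
      case False
      hence "y \<in> ar (Suc k)" using that Rsub[OF km] by auto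
      hence "ar (Suc k) \<inter> Ws ! 0 \<noteq> {}" using that by blast
      hence "0 = Suc k \<or> 0 = Suc (Suc k)" using meet[OF km, of 0] by simp
      then show ?thesis by simp
    qed
    show ?case unfolding Inv_def PPs
    proof (intro conjI)
      show "is_induced_path Eg (?P @ ?R)" by (rule ind)
      have "\<Union>(ar ` {..<Suc k}) \<subseteq> \<Union>(ar ` {..<Suc (Suc k)})" by (intro Union_mono image_mono) auto
      moreover have "ar (Suc k) \<subseteq> \<Union>(ar ` {..<Suc (Suc k)})" by auto
      ultimately show "set (?P @ ?R) \<subseteq> \<Union>(ar ` {..<Suc (Suc k)})" using Psub Rsub[OF km] by auto
      show "hd (?P @ ?R) \<in> Ws ! 0" using Phd Pne by simp
      show "last (?P @ ?R) \<in> Ws ! Suc (Suc k)" using Rlast[OF km] Rne[OF km] by simp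
      show "\<forall>y\<in>set (?P @ ?R). y \<in> Ws ! Suc (Suc k) \<longrightarrow> y = last (?P @ ?R)"
        using onlyl Rne[OF km] by simp
      show "\<forall>y\<in>set (?P @ ?R). y \<in> Ws ! 0 \<longrightarrow> y = hd (?P @ ?R)"
        using only0 Pne by simp
      show "\<forall>i<Suc (Suc k). set (R i) \<subseteq> set (?P @ ?R)"
        using PR by (auto simp: less_Suc_eq)
    qed
  qed
  have Im: "Inv m" using inv[of "m - 1"] m1 by simp
  let ?P = "PP m"
  have hdW: "hd Ws = Ws ! 0" using Wne by (simp add: hd_conv_nth)
  have lastW: "last Ws = Ws ! m" using Wne lenW by (simp add: last_conv_nth)
  have I1: "is_induced_path Eg ?P" and I2: "set ?P \<subseteq> \<Union>(ar ` {..<m})"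
    and I3: "hd ?P \<in> Ws ! 0" and I4: "last ?P \<in> Ws ! m"
    and I5: "\<forall>y\<in>set ?P. y \<in> Ws ! m \<longrightarrow> y = last ?P"
    and I6: "\<forall>y\<in>set ?P. y \<in> Ws ! 0 \<longrightarrow> y = hd ?P"
    and I7: "\<forall>i<m. set (R i) \<subseteq> set ?P"
    using Im unfolding Inv_def by blast+
  have "\<Union>(ar ` {..<m}) \<subseteq> \<Union>AS" using ar by auto
  hence I2': "set ?P \<subseteq> \<Union>AS" using I2 by (rule order_trans[rotated])
  have "uv_rung Eg (\<Union>AS) (hd Ws) (last Ws) ?P"
    using rung_intro[OF I1 I2'] I3 I4 I5 I6 hdW lastW by simp
  moreover have "x \<in> set ?P"
  proof -
    have "pt j = x" using pt_def by simp
    hence "x \<in> set (R j)" using R[OF jm] by simp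
    thus ?thesis using I7 jm by blast
  qed
  ultimately show ?thesis by blast
qed

definition FanG :: "'a mgraph \<Rightarrow> 'a set set \<Rightarrow> 'a set set \<Rightarrow> 'a set \<Rightarrow> 'a set \<Rightarrow> 'a set \<Rightarrow> 'a set \<Rightarrow> bool" where
  "FanG H A K a b u w \<longleftrightarrow> (\<exists>P1 P2. is_path (ARel H A) P1 \<and> is_path (ARel H A) P2 \<and>
     hd P1 = u \<and> hd P2 = u \<and> last P1 = a \<and> last P2 = b \<and> set P1 \<inter> set P2 = {u} \<and>
     set P1 - {a} \<subseteq> K \<and> set P2 - {b} \<subseteq> K \<and>
     ((tl P1 \<noteq> [] \<and> hd (tl P1) = w) \<or> (tl P2 \<noteq> [] \<and> hd (tl P2) = w)))"

lemma FanG_swap: "FanG H A K a b u w \<Longrightarrow> FanG H A K b a u w"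
  unfolding FanG_def by (metis inf_commute)

definition HP :: "'a mgraph \<Rightarrow> 'a set set \<Rightarrow> 'a set \<Rightarrow> 'a set \<Rightarrow> 'a set \<Rightarrow> bool" where
  "HP H A a b E0 \<longleftrightarrow> (\<exists>Ws. is_path (ARel H A) Ws \<and> hd Ws = a \<and> last Ws = b \<and>
      (\<exists>j. Suc j < length Ws \<and> ends H E0 = {Ws ! j, Ws ! Suc j}))"

lemma HP_rev: assumes "HP H A a b E0" shows "HP H A b a E0"
proof -
  obtain Ws j where W: "is_path (ARel H A) Ws" "hd Ws = a" "last Ws = b" "Suc j < length Ws"
    "ends H E0 = {Ws ! j, Ws ! Suc j}" using assms unfolding HP_def by blast
  have Wne: "Ws \<noteq> []" using W by (simp add: is_path_def)
  let ?j = "length Ws - Suc (Suc j)"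
  have "rev Ws ! ?j = Ws ! Suc j" "rev Ws ! Suc ?j = Ws ! j" using W(4) by (simp_all add: rev_nth Suc_diff_Suc)
  moreover have "is_path (ARel H A) (rev Ws)" using W(1) ARel_sym is_path_rev by metis
  moreover have "hd (rev Ws) = b" "last (rev Ws) = a" using W Wne by (simp_all add: hd_rev last_rev)
  moreover have "Suc ?j < length (rev Ws)" using W(4) by simp
  moreover have "ends H E0 = {rev Ws ! ?j, rev Ws ! Suc ?j}" using W(5) calculation(1,2) by (simp add: insert_commute)
  ultimately show ?thesis unfolding HP_def by blast
qed

lemma HP_mono: assumes "HP H A a b E0" "A \<subseteq> B" shows "HP H B a b E0"
proof -
  obtain Ws j where W: "is_path (ARel H A) Ws" "hd Ws = a" "last Ws = b" "Suc j < length Ws"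
    "ends H E0 = {Ws ! j, Ws ! Suc j}" using assms unfolding HP_def by blast
  have "is_path (ARel H B) Ws" using is_path_mono[OF W(1), of "ARel H B"] ARel_mono[OF _ assms(2)] by blast
  thus ?thesis using W unfolding HP_def by blast
qed

lemma leaf_nodes_sub: "leaf_nodes H \<subseteq> nodes H"
  by (auto simp: leaf_nodes_def)

lemma nabla_edge_D:
  assumes net: "is_net Eg X H" and e: "e \<in> nabla_edges H"
  shows "nabla_ends H e \<subseteq> nodes H \<and> card (nabla_ends H e) = 2"
proof -
  from e consider (arc) F where "e = ArcE F" "F \<in> arcs H"
    | (leaf) L1 L2 where "e = LeafE {L1, L2}" "L1 \<in> leaf_nodes H" "L2 \<in> leaf_nodes H" "L1 \<noteq> L2"
    unfolding nabla_edges_def by blast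
  then show ?thesis
  proof cases
    case arc then show ?thesis using net_ends[OF net] by simp
  next
    case leaf then show ?thesis using leaf_nodes_sub by auto
  qed
qed

lemma card2_pair: "card S = 2 \<Longrightarrow> Z \<in> S \<Longrightarrow> \<exists>Y. Y \<noteq> Z \<and> S = {Z, Y}"
  by (metis card_2_iff insert_commute insert_iff singletonD)

lemma fan_in:
  assumes "is_path R P1" "is_path R P2" "hd P1 = w" "hd P2 = w" "set P1 \<inter> set P2 = {w}"
    "u \<in> set P1" "u \<noteq> w" "R u w"
  shows "\<exists>P1'. is_path R P1' \<and> hd P1' = u \<and> last P1' = last P1 \<and> set P1' \<subseteq> set P1 \<and>
     is_path R (u # P2) \<and> set P1' \<inter> set (u # P2) = {u}"
proof -
  obtain ys zs where sp: "P1 = ys @ u # zs" using split_list[OF assms(6)] by blast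
  have p: "is_path R (u # zs)" using assms(1) sp by (metis is_path_append_D2 list.distinct(1))
  have yne: "ys \<noteq> []" using sp assms(3,7) by auto
  have wys: "w \<in> set ys" using yne sp assms(3) by (cases ys) auto
  have d: "distinct P1" using assms(1) by (simp add: is_path_def)
  have wn: "w \<notin> set (u # zs)" using d sp wys by auto
  have uP2: "u \<notin> set P2" using assms(5,6,7) by blast
  have P2ne: "P2 \<noteq> []" using assms(2) by (simp add: is_path_def)
  have p2: "is_path R (u # P2)" using assms(2,4,8) uP2 P2ne by (simp add: is_path_Cons)
  have zsP2: "set zs \<inter> set P2 = {}"
  proof -
    have "set zs \<subseteq> set P1" using sp by auto
    thus ?thesis using assms(5) wn by auto
  qed
  show ?thesis
    apply (rule exI[of _ "u # zs"])
    using p p2 sp zsP2 uP2 by auto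
qed

locale comp =
  fixes Eg :: "'a \<Rightarrow> 'a \<Rightarrow> bool" and X :: "'a set" and H :: "'a mgraph"
    and V1 V2 :: "'a set" and N' :: "'a set set" and Ed' :: "'a nabla_edge set"
  assumes net: "is_net Eg X H"
    and cut: "is_cutpair H V1 V2"
    and sub: "nabla_subgraph H N' Ed'"
    and EdA: "Ed' \<subseteq> ArcE ` arcs H"
    and scp: "sc_prop H V1 V2 N' Ed'"
    and maxl: "\<forall>N'' Ed''. nabla_subgraph H N'' Ed'' \<and> sc_prop H V1 V2 N'' Ed'' \<and>
            N' \<subseteq> N'' \<and> Ed' \<subseteq> Ed'' \<longrightarrow> N'' = N' \<and> Ed'' = Ed'"
begin

lemma swapped: "comp Eg X H V2 V1 N' Ed'"
proof -
  have "sc_prop H V2 V1 = sc_prop H V1 V2"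
    by (intro ext) (auto simp: sc_prop_def insert_commute)
  moreover have "is_cutpair H V2 V1" using cut by (auto simp: is_cutpair_def insert_commute)
  ultimately show ?thesis using net sub EdA scp maxl by (unfold_locales) auto
qed

lemma V12: "V1 \<noteq> V2" "V1 \<in> nodes H" "V2 \<in> nodes H"
  using cut by (auto simp: is_cutpair_def)

lemma N'_sub: "N' \<subseteq> nodes H" using sub by (simp add: nabla_subgraph_def)

lemma Ed'_sub: "Ed' \<subseteq> nabla_edges H" using sub by (simp add: nabla_subgraph_def)

lemma Ed'_ends: "e \<in> Ed' \<Longrightarrow> nabla_ends H e \<subseteq> N'" using sub by (simp add: nabla_subgraph_def)

lemma V12N': "V1 \<in> N'" "V2 \<in> N'" using scp by (auto simp: sc_prop_def)

lemma no_V12: "e \<in> Ed' \<Longrightarrow> nabla_ends H e \<noteq> {V1, V2}" using scp by (auto simp: sc_prop_def)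

lemma K_conn: "mconnected (N' - {V1, V2}) Ed' (nabla_ends H)" using scp by (simp add: sc_prop_def)

lemma inner_edge:
  assumes Z: "Z \<in> N' - {V1, V2}" and e: "e \<in> nabla_edges H" "Z \<in> nabla_ends H e"
  shows "e \<in> Ed'"
proof -
  have ed: "nabla_ends H e \<subseteq> nodes H" "card (nabla_ends H e) = 2" using nabla_edge_D[OF net e(1)] by auto
  obtain Y where Y: "Y \<noteq> Z" "nabla_ends H e = {Z, Y}" using card2_pair[OF ed(2) e(2)] by auto
  define N'' where "N'' = insert Y N'"
  define Ed'' where "Ed'' = insert e Ed'"
  have "nabla_subgraph H N'' Ed''"
  proof -
    have "N'' \<subseteq> nodes H" using N'_sub ed(1) Y(2) N''_def by auto
    moreover have "Ed'' \<subseteq> nabla_edges H" using Ed'_sub e(1) Ed''_def by auto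
    moreover have "\<forall>e'\<in>Ed''. nabla_ends H e' \<subseteq> N''"
    proof
      fix e' assume "e' \<in> Ed''"
      then consider "e' = e" | "e' \<in> Ed'" using Ed''_def by blast
      then show "nabla_ends H e' \<subseteq> N''"
      proof cases
        case 1 then show ?thesis using Y(2) Z N''_def by auto
      next
        case 2 then show ?thesis using Ed'_ends N''_def by blast
      qed
    qed
    ultimately show ?thesis by (simp add: nabla_subgraph_def)
  qed
  moreover have "sc_prop H V1 V2 N'' Ed''"
  proof -
    have "V1 \<in> N''" "V2 \<in> N''" using V12N' N''_def by auto
    moreover have "\<not> (\<exists>e'\<in>Ed''. nabla_ends H e' = {V1, V2})"
      using no_V12 Y Z unfolding Ed''_def by auto
    moreover have "mconnected (N'' - {V1, V2}) Ed'' (nabla_ends H)"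
    proof -
      have c: "mconnected (N' - {V1, V2}) Ed'' (nabla_ends H)"
        using mconnected_mono_E[OF K_conn] Ed''_def by blast
      show ?thesis
      proof (cases "Y \<in> {V1, V2}")
        case True
        hence "N'' - {V1, V2} = N' - {V1, V2}" unfolding N''_def by auto
        then show ?thesis using c by simp
      next
        case False
        hence "N'' - {V1, V2} = insert Y (N' - {V1, V2})" unfolding N''_def by auto
        then show ?thesis using mconnected_insert[OF c Z, of e Y] Y Ed''_def by simp
      qed
    qed
    ultimately show ?thesis by (simp add: sc_prop_def)
  qed
  moreover have "N' \<subseteq> N''" "Ed' \<subseteq> Ed''" using N''_def Ed''_def by auto
  ultimately have "Ed'' = Ed'" using maxl by blast
  thus ?thesis using Ed''_def by auto
qed

lemma inner_arc:
  assumes "Z \<in> N' - {V1, V2}" "e \<in> nabla_edges H" "Z \<in> nabla_ends H e"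
  shows "\<exists>F. e = ArcE F \<and> ArcE F \<in> Ed' \<and> F \<in> arcs H \<and> ends H F \<subseteq> N'"
proof -
  have "e \<in> Ed'" using inner_edge[OF assms] .
  then obtain F where "e = ArcE F" "F \<in> arcs H" using EdA by auto
  moreover have "ends H F \<subseteq> N'" using Ed'_ends[of "ArcE F"] \<open>e \<in> Ed'\<close> \<open>e = ArcE F\<close> by simp
  ultimately show ?thesis using \<open>e \<in> Ed'\<close> by auto
qed

lemma K_ne: "N' - {V1, V2} \<noteq> {}"
proof
  assume K0: "N' - {V1, V2} = {}"
  hence N'eq: "N' = {V1, V2}" using V12N' by auto
  have "\<not> mconnected (nodes H - {V1, V2}) (nabla_edges H) (nabla_ends H)"
    using cut by (simp add: is_cutpair_def)
  then obtain W where W: "W \<in> nodes H" "W \<notin> {V1, V2}" unfolding mconnected_def by auto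
  have Ed0: "Ed' = {}"
  proof (rule ccontr)
    assume "Ed' \<noteq> {}"
    then obtain e where e: "e \<in> Ed'" by blast
    have "card (nabla_ends H e) = 2" using nabla_edge_D[OF net] Ed'_sub e by blast
    moreover have "nabla_ends H e \<subseteq> {V1, V2}" using Ed'_ends[OF e] N'eq by simp
    ultimately have "nabla_ends H e = {V1, V2}" using V12(1)
      by (metis card_2_iff card_seteq finite.emptyI finite.insertI order_refl)
    thus False using no_V12 e by blast
  qed
  define N'' where "N'' = insert W N'"
  have "nabla_subgraph H N'' Ed'" using sub W N''_def Ed0 by (auto simp: nabla_subgraph_def)
  moreover have "sc_prop H V1 V2 N'' Ed'"
  proof -
    have "N'' - {V1, V2} = {W}" using N''_def N'eq W by auto
    moreover have "mconnected {W} Ed' (nabla_ends H)" by (simp add: mconnected_def)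
    ultimately show ?thesis using V12N' Ed0 N''_def by (simp add: sc_prop_def)
  qed
  moreover have "N' \<subseteq> N''" using N''_def by auto
  ultimately have "N'' = N'" using maxl by blast
  thus False using N''_def W N'eq by auto
qed

abbreviation "AA \<equiv> {E. ArcE E \<in> Ed'}"

lemma V1_adj: "\<exists>u\<in>N' - {V1, V2}. ARel H AA u V1"
proof -
  obtain a where a: "a \<in> N' - {V1, V2}" using K_ne by blast
  have conn: "mconnected (nodes H - {V2}) (nabla_edges H) (nabla_ends H)"
    using net_D7[OF net] V12 unfolding mbiconnected_def by blast
  have a1: "a \<in> nodes H - {V2}" using a N'_sub by auto
  have b1: "V1 \<in> nodes H - {V2}" "V1 \<notin> N' - {V1, V2}" using V12 by auto
  from partition_edge[OF conn a1 a b1]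
  obtain e x y where exy: "e \<in> nabla_edges H" "x \<in> nodes H - {V2}" "x \<in> N' - {V1, V2}"
    "y \<in> nodes H - {V2}" "y \<notin> N' - {V1, V2}" "nabla_ends H e = {x, y}"
    by (elim bexE exE conjE) (rule that)
  obtain F where F: "e = ArcE F" "ArcE F \<in> Ed'" "ends H F \<subseteq> N'"
    using inner_arc[OF exy(3) exy(1)] exy(6) by auto
  have "y \<in> N'" using F exy(6) by auto
  hence "y = V1" using exy(4,5) by auto
  thus ?thesis using exy F unfolding ARel_def by auto
qed

lemma conv:
  assumes "is_path (madj Nx (nabla_edges H) (nabla_ends H)) Q" "hd Q \<in> N' - {V1, V2}"
    "\<forall>y\<in>set (butlast Q). y \<notin> {V1, V2}"
  shows "is_path (ARel H AA) Q \<and> set (butlast Q) \<subseteq> N' - {V1, V2} \<and> last Q \<in> N'"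
  using assms
proof (induction Q rule: induct_list012)
  case 1 then show ?case by (simp add: is_path_def)
next
  case (2 x) then show ?case by (simp add: is_path_def)
next
  case (3 a b rest)
  have mab: "madj Nx (nabla_edges H) (nabla_ends H) a b" and anot: "a \<notin> set (b # rest)"
    and pb: "is_path (madj Nx (nabla_edges H) (nabla_ends H)) (b # rest)"
    using "3.prems"(1) by (auto simp: is_path_Cons)
  obtain e where e: "e \<in> nabla_edges H" "nabla_ends H e = {a, b}" using mab by (auto simp: madj_def)
  have aK: "a \<in> N' - {V1, V2}" using "3.prems"(2) by simp
  obtain F where F: "e = ArcE F" "ArcE F \<in> Ed'" "ends H F \<subseteq> N'"
    using inner_arc[OF aK e(1)] e(2) by auto
  have ab: "ARel H AA a b" using F e unfolding ARel_def by auto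
  have bN: "b \<in> N'" using F e by auto
  show ?case
  proof (cases "rest = []")
    case True
    then show ?thesis using ab bN aK anot by (auto simp: is_path_Cons)
  next
    case False
    have "b \<in> set (butlast (a # b # rest))" using False by simp
    hence bK: "b \<in> N' - {V1, V2}" using "3.prems"(3) bN by blast
    have "\<forall>y\<in>set (butlast (b # rest)). y \<notin> {V1, V2}" using "3.prems"(3) False by simp
    hence IH: "is_path (ARel H AA) (b # rest) \<and> set (butlast (b # rest)) \<subseteq> N' - {V1, V2} \<and> last (b # rest) \<in> N'"
      using "3.IH"(2)[OF pb] bK by simp
    show ?thesis using IH ab anot aK False by (auto simp: is_path_Cons)
  qed
qed

end

lemma ARel_neq:
  assumes "ARel H A x y" "A \<subseteq> arcs H" "is_net Eg X H"
  shows "x \<noteq> y"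
proof
  assume "x = y"
  then obtain F where F: "F \<in> A" "ends H F = {x}" using assms(1) by (auto simp: ARel_def)
  have "F \<in> arcs H" using F(1) assms(2) by blast
  hence "card (ends H F) = 2" using net_ends[OF assms(3)] by blast
  thus False using F(2) by simp
qed

lemma set_butlast_last: assumes "Q \<noteq> []" shows "set Q = insert (last Q) (set (butlast Q))"
proof -
  have "set Q = set (butlast Q @ [last Q])" using assms by simp
  thus ?thesis by auto
qed

context comp
begin

abbreviation "KK \<equiv> N' - {V1, V2}"

lemma AA_arcs: "AA \<subseteq> arcs H" using EdA by auto

lemma KK_nodes: "KK \<subseteq> nodes H" using N'_sub by auto

lemma conn_minus: "v \<in> nodes H \<Longrightarrow> mconnected (nodes H - {v}) (nabla_edges H) (nabla_ends H)"
  using net_D7[OF net] unfolding mbiconnected_def by blast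

lemma base_fan:
  assumes uK: "u \<in> KK" and uV: "ARel H AA u V1"
  shows "FanG H AA KK V1 V2 u V1"
proof -
  have r: "(madj (nodes H - {V1}) (nabla_edges H) (nabla_ends H))\<^sup>*\<^sup>* u V2"
    using conn_minus[OF V12(2)] uK KK_nodes V12 unfolding mconnected_def by blast
  obtain Q where Q: "is_path (madj (nodes H - {V1}) (nabla_edges H) (nabla_ends H)) Q" "hd Q = u"
    "last Q \<in> {V2}" "\<forall>y\<in>set (butlast Q). y \<notin> {V2}"
    using first_hit[OF r, of "{V2}"] uK by blast
  have Qne: "Q \<noteq> []" using Q(1) by (simp add: is_path_def)
  have QN: "set Q \<subseteq> nodes H - {V1}" using path_in_N[OF Q(1)] Q(2) uK KK_nodes by auto
  have "\<forall>y\<in>set (butlast Q). y \<notin> {V1, V2}" using Q(4) QN by (auto dest: in_set_butlastD)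
  hence cv: "is_path (ARel H AA) Q" "set (butlast Q) \<subseteq> KK" using conv[OF Q(1)] Q(2) uK by auto
  have p1: "is_path (ARel H AA) [u, V1]" using uV uK by (simp add: is_path_Cons)
  have sQ: "set Q = insert V2 (set (butlast Q))" using set_butlast_last[OF Qne] Q(3) by simp
  have uQ: "u \<in> set Q" using Q(2) Qne hd_in_set by blast
  show ?thesis unfolding FanG_def
    apply (rule exI[of _ "[u, V1]"], rule exI[of _ Q])
    using p1 cv Q(2,3) QN uQ sQ uK by auto
qed

lemma fan_out:
  assumes ab: "{a, b} = {V1, V2}" and uK: "u \<in> KK" and wK: "w \<in> KK" and uw: "ARel H AA u w"
    and P1: "is_path (ARel H AA) P1" and P2: "is_path (ARel H AA) P2" and h1: "hd P1 = w" and h2: "hd P2 = w"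
    and l1: "last P1 = a" and l2: "last P2 = b" and i12: "set P1 \<inter> set P2 = {w}"
    and k1: "set P1 - {a} \<subseteq> KK" and k2: "set P2 - {b} \<subseteq> KK"
    and u1: "u \<notin> set P1" and u2: "u \<notin> set P2"
    and Q: "is_path (madj (nodes H - {w}) (nabla_edges H) (nabla_ends H)) Q" and hQ: "hd Q = u"
    and zQ: "last Q \<in> set P1" "last Q \<noteq> w"
    and bQ: "\<forall>y\<in>set (butlast Q). y \<notin> (set P1 \<union> set P2) - {w}"
  shows "FanG H AA KK a b u w"
proof -
  have P1ne: "P1 \<noteq> []" and P2ne: "P2 \<noteq> []" and Qne: "Q \<noteq> []"
    using P1 P2 Q by (auto simp: is_path_def)
  have aP1: "a \<in> set P1" using l1 P1ne last_in_set by blast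
  have bP2: "b \<in> set P2" using l2 P2ne last_in_set by blast
  have aw: "a \<noteq> w" "b \<noteq> w" using ab wK by auto
  have uw': "u \<noteq> w" using u1 h1 P1ne hd_in_set by blast
  have QN: "set Q \<subseteq> nodes H - {w}" using path_in_N[OF Q] hQ uK KK_nodes uw' by auto
  have "\<forall>y\<in>set (butlast Q). y \<notin> {V1, V2}"
  proof
    fix y assume "y \<in> set (butlast Q)"
    hence "y \<notin> (set P1 \<union> set P2) - {w}" using bQ by blast
    moreover have "V1 \<in> (set P1 \<union> set P2) - {w}" "V2 \<in> (set P1 \<union> set P2) - {w}"
      using ab aP1 bP2 aw by (auto simp: doubleton_eq_iff)
    ultimately show "y \<notin> {V1, V2}" by auto
  qed
  hence QA: "is_path (ARel H AA) Q" and QK: "set (butlast Q) \<subseteq> KK"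
    using conv[OF Q] hQ uK by auto
  define z where "z = last Q"
  obtain ys zs where sp: "P1 = ys @ z # zs" using split_list zQ(1) z_def by metis
  have yne: "ys \<noteq> []" using sp h1 zQ(2) z_def by auto
  have wys: "w \<in> set ys" using yne sp h1 by (cases ys) auto
  have d1: "distinct P1" using P1 by (simp add: is_path_def)
  have wzs: "w \<notin> set (z # zs)" using d1 sp wys by auto
  have pz: "is_path (ARel H AA) (z # zs)" using P1 sp by (metis is_path_append_D2 list.distinct(1))
  have sQ: "set Q = insert z (set (butlast Q))" using set_butlast_last[OF Qne] z_def by simp
  have wQ: "w \<notin> set Q" using QN by auto
  have zzs: "set (z # zs) \<subseteq> set P1" using sp by auto
  have int1: "set Q \<inter> set (z # zs) = {z}"
  proof -
    have "y = z" if "y \<in> set Q" "y \<in> set (z # zs)" for y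
    proof (rule ccontr)
      assume "y \<noteq> z"
      hence "y \<in> set (butlast Q)" using sQ that(1) by auto
      hence "y \<notin> (set P1 \<union> set P2) - {w}" using bQ by blast
      moreover have "y \<in> set P1" using that(2) zzs by auto
      ultimately show False using that(2) wzs by auto
    qed
    thus ?thesis using sQ by auto
  qed
  have pP1': "is_path (ARel H AA) (Q @ zs)"
    using is_path_splice[OF QA pz _ ] int1 z_def by simp
  have pP2': "is_path (ARel H AA) (u # P2)" using P2 h2 uw u2 P2ne by (simp add: is_path_Cons)
  have hd1: "hd (Q @ zs) = u" using hQ Qne by simp
  have last1: "last (Q @ zs) = a"
  proof -
    have "last P1 = last (z # zs)" using sp by simp
    thus ?thesis using l1 z_def by (cases "zs = []") auto
  qed
  have uQ: "u \<in> set Q" using hQ Qne hd_in_set by blast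
  have int: "set (Q @ zs) \<inter> set (u # P2) = {u}"
  proof -
    have "y = u" if y1: "y \<in> set (Q @ zs)" and y2: "y \<in> set (u # P2)" for y
    proof (rule ccontr)
      assume yu: "y \<noteq> u"
      hence yP2: "y \<in> set P2" using y2 by simp
      show False
      proof (cases "y \<in> set Q")
        case True
        show False
        proof (cases "y = z")
          case True
          hence "y \<in> set P1" using zzs by auto
          moreover have "y \<noteq> w" using True zQ(2) z_def by simp
          ultimately show False using yP2 i12 by blast
        next
          case False
          hence "y \<in> set (butlast Q)" using sQ \<open>y \<in> set Q\<close> by auto
          hence "y \<notin> (set P1 \<union> set P2) - {w}" using bQ by blast
          hence "y = w" using yP2 by blast
          thus False using wQ \<open>y \<in> set Q\<close> by simp
        qed
      next
        case False
        hence "y \<in> set zs" using y1 by simp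
        hence "y \<in> set P1" "y \<noteq> w" using zzs wzs by auto
        thus False using yP2 i12 by blast
      qed
    qed
    thus ?thesis using uQ by auto
  qed
  have kk1: "set (Q @ zs) - {a} \<subseteq> KK"
  proof
    fix y assume y: "y \<in> set (Q @ zs) - {a}"
    show "y \<in> KK"
    proof (cases "y \<in> set (butlast Q)")
      case True then show ?thesis using QK by blast
    next
      case False
      hence "y \<in> set (z # zs)" using y sQ by auto
      hence "y \<in> set P1 - {a}" using zzs y by auto
      thus ?thesis using k1 by blast
    qed
  qed
  have kk2: "set (u # P2) - {b} \<subseteq> KK" using k2 uK by auto
  show ?thesis unfolding FanG_def
    apply (rule exI[of _ "Q @ zs"], rule exI[of _ "u # P2"])
    using pP1' pP2' hd1 last1 l2 P2ne int kk1 kk2 h2 by auto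
qed

lemma fan_step:
  assumes uK: "u \<in> KK" and wK: "w \<in> KK" and uw: "ARel H AA u w" and F: "FanG H AA KK V1 V2 w w'"
  shows "FanG H AA KK V1 V2 u w"
proof -
  obtain P1 P2 where P: "is_path (ARel H AA) P1" "is_path (ARel H AA) P2" "hd P1 = w" "hd P2 = w"
    "last P1 = V1" "last P2 = V2" "set P1 \<inter> set P2 = {w}" "set P1 - {V1} \<subseteq> KK" "set P2 - {V2} \<subseteq> KK"
    using F unfolding FanG_def by (elim exE conjE) (rule that; assumption)
  have P1ne: "P1 \<noteq> []" and P2ne: "P2 \<noteq> []" using P by (auto simp: is_path_def)
  have uw': "u \<noteq> w" using ARel_neq[OF uw AA_arcs net] .
  show ?thesis
  proof (cases "u \<in> set P1")
    case True
    obtain P1' where P1': "is_path (ARel H AA) P1'" "hd P1' = u" "last P1' = last P1" "set P1' \<subseteq> set P1"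
      "is_path (ARel H AA) (u # P2)" "set P1' \<inter> set (u # P2) = {u}"
      using fan_in[OF P(1,2,3,4,7) True uw' uw] by blast
    show ?thesis unfolding FanG_def
      apply (rule exI[of _ P1'], rule exI[of _ "u # P2"])
      using P1' P P2ne uK by auto
  next
    case nP1: False
    show ?thesis
    proof (cases "u \<in> set P2")
      case True
      have i21: "set P2 \<inter> set P1 = {w}" using P(7) by auto
      obtain P2' where P2': "is_path (ARel H AA) P2'" "hd P2' = u" "last P2' = last P2" "set P2' \<subseteq> set P2"
        "is_path (ARel H AA) (u # P1)" "set P2' \<inter> set (u # P1) = {u}"
        using fan_in[OF P(2,1,4,3) i21 True uw' uw] by blast
      have "FanG H AA KK V2 V1 u w" unfolding FanG_def
        apply (rule exI[of _ P2'], rule exI[of _ "u # P1"])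
        using P2' P P1ne uK by auto
      then show ?thesis by (rule FanG_swap)
    next
      case nP2: False
      have wN: "w \<in> nodes H" using wK KK_nodes by auto
      have r: "(madj (nodes H - {w}) (nabla_edges H) (nabla_ends H))\<^sup>*\<^sup>* u V1"
        using conn_minus[OF wN] uK KK_nodes V12 wK uw' unfolding mconnected_def by blast
      define T where "T = (set P1 \<union> set P2) - {w}"
      have V1T: "V1 \<in> T" using P(5) P1ne last_in_set wK T_def by fastforce
      have uT: "u \<notin> T" using nP1 nP2 T_def by simp
      obtain Q where Q: "is_path (madj (nodes H - {w}) (nabla_edges H) (nabla_ends H)) Q" "hd Q = u"
        "last Q \<in> T" "\<forall>y\<in>set (butlast Q). y \<notin> T"
        using first_hit[OF r V1T uT] by blast
      show ?thesis
      proof (cases "last Q \<in> set P1")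
        case True
        have "last Q \<noteq> w" using Q(3) T_def by simp
        then show ?thesis using fan_out[OF _ uK wK uw P(1,2,3,4,5,6,7,8,9) nP1 nP2 Q(1,2) True]
          Q(4) T_def by blast
      next
        case False
        hence z2: "last Q \<in> set P2" "last Q \<noteq> w" using Q(3) T_def by auto
        have i21: "set P2 \<inter> set P1 = {w}" using P(7) by auto
        have "\<forall>y\<in>set (butlast Q). y \<notin> (set P2 \<union> set P1) - {w}" using Q(4) T_def by auto
        hence "FanG H AA KK V2 V1 u w"
          using fan_out[OF _ uK wK uw P(2,1,4,3,6,5) i21 P(9,8) nP2 nP1 Q(1,2) z2] by (simp add: insert_commute)
        then show ?thesis by (rule FanG_swap)
      qed
    qed
  qed
qed

lemma fan_all:
  assumes "u \<in> KK" shows "\<exists>w. FanG H AA KK V1 V2 u w"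
proof -
  obtain u0 where u0: "u0 \<in> KK" "ARel H AA u0 V1" using V1_adj by blast
  have "(madj KK Ed' (nabla_ends H))\<^sup>*\<^sup>* u u0" using K_conn assms u0(1) unfolding mconnected_def by blast
  thus ?thesis
  proof (induction rule: converse_rtranclp_induct)
    case base then show ?case using base_fan[OF u0] by blast
  next
    case (step x y)
    have xy: "x \<in> KK" "y \<in> KK" using step(1) by (auto simp: madj_def)
    obtain e where e: "e \<in> Ed'" "nabla_ends H e = {x, y}" using step(1) by (auto simp: madj_def)
    obtain F where "e = ArcE F" using EdA e(1) by auto
    hence "ARel H AA x y" using e unfolding ARel_def by auto
    then show ?case using fan_step[OF xy _] step(3) by blast
  qed
qed

lemma hp_mid:
  assumes E0: "E0 \<in> AA" "ends H E0 = {p, q}" and pK: "p \<in> KK" and qK: "q \<in> KK"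
  shows "HP H AA V1 V2 E0"
proof -
  obtain w' where "FanG H AA KK V1 V2 p w'" using fan_all[OF pK] by blast
  moreover have "ARel H AA q p" using E0 unfolding ARel_def by (auto simp: insert_commute)
  ultimately have F: "FanG H AA KK V1 V2 q p" using fan_step[OF qK pK] by blast
  obtain P1 P2 where P: "is_path (ARel H AA) P1" "is_path (ARel H AA) P2" "hd P1 = q" "hd P2 = q"
    "last P1 = V1" "last P2 = V2" "set P1 \<inter> set P2 = {q}"
    and alt: "(tl P1 \<noteq> [] \<and> hd (tl P1) = p) \<or> (tl P2 \<noteq> [] \<and> hd (tl P2) = p)"
    using F unfolding FanG_def by (elim exE conjE) (rule that; assumption)
  have P1ne: "P1 \<noteq> []" and P2ne: "P2 \<noteq> []" using P by (auto simp: is_path_def)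
  obtain t where t: "P2 = q # t" using P2ne P(4) by (cases P2) auto
  have tne: "t \<noteq> []" using t P(6) qK by auto
  have pt: "is_path (ARel H AA) t" "ARel H AA q (hd t)" "q \<notin> set t"
    using P(2) t tne by (simp_all add: is_path_Cons)
  have dis: "set (rev P1) \<inter> set t = {}" using P(7) t pt(3) by auto
  have prev: "is_path (ARel H AA) (rev P1)" using is_path_rev[OF P(1)] ARel_sym by blast
  have lrev: "last (rev P1) = q" using P(3) P1ne by (simp add: last_rev)
  have pW: "is_path (ARel H AA) (rev P1 @ t)"
    using is_path_append[OF prev pt(1) dis] lrev pt(2) by simp
  have hW: "hd (rev P1 @ t) = V1" using P(5) P1ne by (simp add: hd_rev)
  have lW: "last (rev P1 @ t) = V2" using P(6) t tne by simp
  have "\<exists>j. Suc j < length (rev P1 @ t) \<and> ends H E0 = {(rev P1 @ t) ! j, (rev P1 @ t) ! Suc j}"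
  proof (cases "tl P1 \<noteq> [] \<and> hd (tl P1) = p")
    case True
    then obtain r where r: "P1 = q # p # r" using P(3) P1ne by (cases P1; cases "tl P1") auto
    have "(rev P1 @ t) = rev r @ [p, q] @ t" using r by simp
    hence "(rev P1 @ t) ! length r = p" "(rev P1 @ t) ! Suc (length r) = q"
      "Suc (length r) < length (rev P1 @ t)"
      using r by (simp_all add: nth_append)
    then show ?thesis using E0(2) by blast
  next
    case False
    hence "hd t = p" using alt t by auto
    then obtain r where r: "t = p # r" using tne by (cases t) auto
    have "(rev P1 @ t) ! (length P1 - 1) = q"
      using P1ne P(3) by (simp add: nth_append rev_nth hd_conv_nth)
    moreover have "(rev P1 @ t) ! Suc (length P1 - 1) = p" using P1ne r by (simp add: nth_append)
    moreover have "Suc (length P1 - 1) < length (rev P1 @ t)" using P1ne r by simp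
    ultimately show ?thesis using E0(2) by (metis insert_commute)
  qed
  thus ?thesis unfolding HP_def using pW hW lW by blast
qed

lemma hp_end1:
  assumes E0: "E0 \<in> AA" "ends H E0 = {V1, q}" and qK: "q \<in> KK"
  shows "HP H AA V1 V2 E0"
proof -
  obtain w' where "FanG H AA KK V1 V2 q w'" using fan_all[OF qK] by blast
  then obtain P1 P2 where P: "is_path (ARel H AA) P2" "hd P2 = q" "last P2 = V2" "set P2 - {V2} \<subseteq> KK"
    unfolding FanG_def by (elim exE conjE) (rule that; assumption)
  have P2ne: "P2 \<noteq> []" using P by (auto simp: is_path_def)
  have V1P2: "V1 \<notin> set P2" using P(4) V12(1) by auto
  have a: "ARel H AA V1 q" using E0 unfolding ARel_def by auto
  have pW: "is_path (ARel H AA) (V1 # P2)" using P(1,2) P2ne V1P2 a by (simp add: is_path_Cons)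
  have "(V1 # P2) ! 0 = V1" "(V1 # P2) ! Suc 0 = q" "Suc 0 < length (V1 # P2)"
    using P(2) P2ne by (simp_all add: hd_conv_nth)
  hence "\<exists>j. Suc j < length (V1 # P2) \<and> ends H E0 = {(V1 # P2) ! j, (V1 # P2) ! Suc j}"
    using E0(2) by metis
  moreover have "hd (V1 # P2) = V1" "last (V1 # P2) = V2" using P(3) P2ne by auto
  ultimately show ?thesis unfolding HP_def using pW by blast
qed

lemma hpath:
  assumes E0: "E0 \<in> AA"
  shows "HP H AA V1 V2 E0"
proof -
  have E0H: "E0 \<in> arcs H" using E0 AA_arcs by blast
  have c2: "card (ends H E0) = 2" using net_ends[OF net E0H] by simp
  obtain p q where pq: "p \<noteq> q" "ends H E0 = {p, q}" using c2 card_2_iff by metis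
  have sN: "{p, q} \<subseteq> N'" using Ed'_ends[of "ArcE E0"] E0 pq by simp
  have nV: "{p, q} \<noteq> {V1, V2}" using no_V12[of "ArcE E0"] E0 pq by simp
  have sw: "comp Eg X H V2 V1 N' Ed'" by (rule swapped)
  have KKs: "N' - {V2, V1} = KK" by (auto simp: insert_commute)
  show ?thesis
  proof (cases "p \<in> KK \<and> q \<in> KK")
    case True then show ?thesis using hp_mid[OF E0 pq(2)] by blast
  next
    case False
    hence "p \<in> {V1, V2} \<or> q \<in> {V1, V2}" using sN by auto
    moreover have "\<not> (p \<in> {V1, V2} \<and> q \<in> {V1, V2})"
      using pq(1) nV V12(1) by auto
    ultimately consider "p = V1" "q \<in> KK" | "p = V2" "q \<in> KK" | "q = V1" "p \<in> KK" | "q = V2" "p \<in> KK"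
      using sN by auto
    then show ?thesis
    proof cases
      case 1 then show ?thesis using hp_end1[OF E0] pq(2) by blast
    next
      case 2
      hence "HP H AA V2 V1 E0" using comp.hp_end1[OF sw E0, of q] pq(2) KKs by simp
      then show ?thesis by (rule HP_rev)
    next
      case 3 then show ?thesis using hp_end1[OF E0, of p] pq(2) by (simp add: insert_commute)
    next
      case 4
      hence "HP H AA V2 V1 E0" using comp.hp_end1[OF sw E0, of p] pq(2) KKs by (simp add: insert_commute)
      then show ?thesis by (rule HP_rev)
    qed
  qed
qed

end

lemma merge_sym: "merge H V1 V2 C = merge H V2 V1 C"
proof -
  have e: "{V1, V2} = {V2, V1}" by (simp add: insert_commute)
  have n: "{V \<in> nodes H. V = V1 \<or> V = V2 \<or> (\<exists>E\<in>arcs H. E \<inter> C = {} \<and> V \<in> ends H E)} =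
    {V \<in> nodes H. V = V2 \<or> V = V1 \<or> (\<exists>E\<in>arcs H. E \<inter> C = {} \<and> V \<in> ends H E)}" by blast
  show ?thesis unfolding merge_def n by (simp only: e)
qed

locale chunk =
  fixes Vg :: "'a set" and Eg :: "'a \<Rightarrow> 'a \<Rightarrow> bool" and X :: "'a set" and H :: "'a mgraph"
    and V1 V2 C :: "'a set" and S :: "'a set set set"
  assumes sg: "simple_graph Vg Eg" and net: "is_net Eg X H"
    and Sne: "S \<noteq> {}" and Ssc: "\<forall>A\<in>S. split_component H A {V1, V2}" and Cdef: "C = \<Union>(\<Union>S)"
begin

lemma swapped: "chunk Vg Eg X H V2 V1 C S"
  using sg net Sne Ssc Cdef by unfold_locales (auto simp: insert_commute)

abbreviation "AS \<equiv> \<Union>S"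
abbreviation "M \<equiv> merge H V1 V2 C"
abbreviation "Inner \<equiv> {Z. \<exists>F\<in>AS. Z \<in> ends H F} - {V1, V2}"

lemma sym: "Eg x y \<Longrightarrow> Eg y x" using sg by (simp add: simple_graph_def)

lemma sc_cases:
  assumes "A \<in> S"
  shows "(\<exists>E\<in>arcs H. A = {E} \<and> ends H E = {V1, V2}) \<or>
         (\<exists>N' Ed'. comp Eg X H V1 V2 N' Ed' \<and> A = {E. ArcE E \<in> Ed'})"
proof -
  have "split_component H A {V1, V2}" using Ssc assms by blast
  then consider (one) E where "E \<in> arcs H" "A = {E}" "{V1, V2} = ends H E"
    | (two) U V N' Ed' where "{V1, V2} = {U, V}" "is_cutpair H U V" "nabla_subgraph H N' Ed'"
        "Ed' \<subseteq> ArcE ` arcs H" "sc_prop H U V N' Ed'"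
        "\<forall>N'' Ed''. nabla_subgraph H N'' Ed'' \<and> sc_prop H U V N'' Ed'' \<and>
            N' \<subseteq> N'' \<and> Ed' \<subseteq> Ed'' \<longrightarrow> N'' = N' \<and> Ed'' = Ed'" "A = {E. ArcE E \<in> Ed'}"
    unfolding split_component_def by blast
  then show ?thesis
  proof cases
    case one then show ?thesis by auto
  next
    case two
    have c: "comp Eg X H U V N' Ed'" using two net by unfold_locales auto
    have "U \<noteq> V" using two(2) by (simp add: is_cutpair_def)
    hence "(U = V1 \<and> V = V2) \<or> (U = V2 \<and> V = V1)" using two(1) by (metis doubleton_eq_iff)
    then show ?thesis
    proof
      assume "U = V1 \<and> V = V2" then show ?thesis using c two by auto
    next
      assume "U = V2 \<and> V = V1" then show ?thesis using comp.swapped[OF c] two by auto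
    qed
  qed
qed

lemma V12: "V1 \<noteq> V2" "V1 \<in> nodes H" "V2 \<in> nodes H"
proof -
  obtain A where A: "A \<in> S" using Sne by blast
  have "V1 \<noteq> V2 \<and> V1 \<in> nodes H \<and> V2 \<in> nodes H"
    using sc_cases[OF A]
  proof
    assume "\<exists>E\<in>arcs H. A = {E} \<and> ends H E = {V1, V2}"
    then obtain E where "E \<in> arcs H" "ends H E = {V1, V2}" by blast
    thus ?thesis using net_ends[OF net] by (metis card_2_iff doubleton_eq_iff insert_subset)
  next
    assume "\<exists>N' Ed'. comp Eg X H V1 V2 N' Ed' \<and> A = {E. ArcE E \<in> Ed'}"
    then obtain N' Ed' where c: "comp Eg X H V1 V2 N' Ed'" by blast
    show ?thesis using comp.V12[OF c] by blast
  qed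
  thus "V1 \<noteq> V2" "V1 \<in> nodes H" "V2 \<in> nodes H" by auto
qed

lemma AS_arcs: "AS \<subseteq> arcs H"
proof
  fix F assume "F \<in> AS"
  then obtain A where A: "A \<in> S" "F \<in> A" by blast
  show "F \<in> arcs H" using sc_cases[OF A(1)]
  proof
    assume "\<exists>E\<in>arcs H. A = {E} \<and> ends H E = {V1, V2}" thus ?thesis using A by auto
  next
    assume "\<exists>N' Ed'. comp Eg X H V1 V2 N' Ed' \<and> A = {E. ArcE E \<in> Ed'}"
    thus ?thesis using comp.AA_arcs A by blast
  qed
qed

lemma V1_inc: "\<exists>F\<in>AS. V1 \<in> ends H F"
proof -
  obtain A where A: "A \<in> S" using Sne by blast
  show ?thesis using sc_cases[OF A]
  proof
    assume "\<exists>E\<in>arcs H. A = {E} \<and> ends H E = {V1, V2}" thus ?thesis using A by auto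
  next
    assume "\<exists>N' Ed'. comp Eg X H V1 V2 N' Ed' \<and> A = {E. ArcE E \<in> Ed'}"
    then obtain N' Ed' where c: "comp Eg X H V1 V2 N' Ed'" "A = {E. ArcE E \<in> Ed'}" by blast
    obtain u where "ARel H {E. ArcE E \<in> Ed'} u V1" using comp.V1_adj[OF c(1)] by blast
    then obtain F where "F \<in> A" "ends H F = {u, V1}" using c(2) by (auto simp: ARel_def)
    thus ?thesis using A by auto
  qed
qed

lemma AS_ne: "AS \<noteq> {}" using V1_inc by blast

lemma C_ne: "C \<noteq> {}"
proof -
  obtain F where "F \<in> AS" using AS_ne by blast
  thus ?thesis using net_arc_ne[OF net] AS_arcs Cdef by blast
qed

lemma surv_iff:
  assumes E: "E \<in> arcs H" shows "E \<inter> C = {} \<longleftrightarrow> E \<notin> AS"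
proof
  assume "E \<inter> C = {}"
  thus "E \<notin> AS" using net_arc_ne[OF net E] Cdef by blast
next
  assume nE: "E \<notin> AS"
  have "E \<inter> F = {}" if "F \<in> AS" for F
    using net_disj[OF net E] AS_arcs that nE by blast
  thus "E \<inter> C = {}" using Cdef by blast
qed

lemma inner_in:
  assumes Z: "Z \<in> Inner" and e: "e \<in> nabla_edges H" "Z \<in> nabla_ends H e"
  shows "\<exists>F\<in>AS. e = ArcE F"
proof -
  obtain F0 A where F0: "A \<in> S" "F0 \<in> A" "Z \<in> ends H F0" and ZV: "Z \<notin> {V1, V2}" using Z by blast
  show ?thesis using sc_cases[OF F0(1)]
  proof
    assume "\<exists>E\<in>arcs H. A = {E} \<and> ends H E = {V1, V2}"
    thus ?thesis using F0 ZV by auto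
  next
    assume "\<exists>N' Ed'. comp Eg X H V1 V2 N' Ed' \<and> A = {E. ArcE E \<in> Ed'}"
    then obtain N' Ed' where c: "comp Eg X H V1 V2 N' Ed'" "A = {E. ArcE E \<in> Ed'}" by blast
    have "ends H F0 \<subseteq> N'" using comp.Ed'_ends[OF c(1), of "ArcE F0"] F0 c(2) by simp
    hence "Z \<in> N' - {V1, V2}" using F0 ZV by auto
    then obtain F where "e = ArcE F" "ArcE F \<in> Ed'" using comp.inner_arc[OF c(1) _ e] by blast
    thus ?thesis using c(2) F0(1) by auto
  qed
qed

lemma nodesM: "nodes M = {V \<in> nodes H. V = V1 \<or> V = V2 \<or> (\<exists>E\<in>arcs H. E \<inter> C = {} \<and> V \<in> ends H E)}"
  by (simp add: merge_def)
lemma arcsM: "arcs M = {E \<in> arcs H. E \<inter> C = {}} \<union> {C}"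
  by (simp add: merge_def)
lemma endsM: "ends M E = (if E = C then {V1, V2} else ends H E)"
  by (simp add: merge_def)

lemma C_notsurv: "\<not> (C \<inter> C = {})" using C_ne by simp

lemma V12M: "V1 \<in> nodes M" "V2 \<in> nodes M" using V12 nodesM by auto

lemma nodesM_sub: "nodes M \<subseteq> nodes H" using nodesM by auto

lemma surv_ends_M: "E \<in> arcs H \<Longrightarrow> E \<inter> C = {} \<Longrightarrow> ends H E \<subseteq> nodes M"
  using nodesM net_ends[OF net] by blast

lemma D1: "Z \<in> Inner \<Longrightarrow> Z \<notin> nodes M"
proof
  assume Z: "Z \<in> Inner" and ZM: "Z \<in> nodes M"
  then obtain E where E: "E \<in> arcs H" "E \<inter> C = {}" "Z \<in> ends H E" using nodesM by auto
  have "ArcE E \<in> nabla_edges H" using E by (simp add: nabla_edges_def)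
  moreover have "Z \<in> nabla_ends H (ArcE E)" using E by simp
  ultimately obtain F where "F \<in> AS" "ArcE E = ArcE F" using inner_in[OF Z] by blast
  thus False using surv_iff E by auto
qed

lemma other_leaf: "L \<in> leaf_nodes H \<Longrightarrow> \<exists>L'\<in>leaf_nodes H. L' \<noteq> L"
proof -
  assume L: "L \<in> leaf_nodes H"
  have "card (leaf_nodes H) = 3" using net_D11[OF net] .
  hence "leaf_nodes H \<noteq> {L}" by auto
  thus ?thesis using L by blast
qed

lemma D2: "L \<in> leaf_nodes H \<Longrightarrow> L \<notin> Inner"
proof
  assume L: "L \<in> leaf_nodes H" and LI: "L \<in> Inner"
  obtain L' where L': "L' \<in> leaf_nodes H" "L' \<noteq> L" using other_leaf[OF L] by blast
  have "LeafE {L, L'} \<in> nabla_edges H" using L L' unfolding nabla_edges_def by auto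
  moreover have "L \<in> nabla_ends H (LeafE {L, L'})" by simp
  ultimately obtain F where "LeafE {L, L'} = ArcE F" using inner_in[OF LI] by blast
  thus False by simp
qed

lemma leaf_M: "L \<in> leaf_nodes H \<Longrightarrow> L \<in> nodes M"
proof -
  assume L: "L \<in> leaf_nodes H"
  have LH: "L \<in> nodes H" and d: "mdegree H L = 1" using L by (auto simp: leaf_nodes_def)
  then obtain F where F: "F \<in> arcs H" "L \<in> ends H F"
    unfolding mdegree_def by (metis (no_types, lifting) card.empty empty_Collect_eq zero_neq_one)
  show "L \<in> nodes M"
  proof (cases "F \<inter> C = {}")
    case True then show ?thesis using F LH nodesM by auto
  next
    case False
    hence "F \<in> AS" using surv_iff F by blast
    hence "L \<in> {V1, V2} \<or> L \<in> Inner" using F by blast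
    then show ?thesis using D2[OF L] V12M by auto
  qed
qed

lemma Mnode_arcs:
  assumes W: "W \<in> nodes M" "W \<notin> {V1, V2}" and E: "E \<in> arcs H" "W \<in> ends H E"
  shows "E \<inter> C = {}"
proof (rule ccontr)
  assume "E \<inter> C \<noteq> {}"
  hence "E \<in> AS" using surv_iff E by blast
  hence "W \<in> Inner" using W E by blast
  thus False using D1 W by blast
qed

end

context chunk
begin

lemma deg_other:
  assumes W: "W \<in> nodes M" "W \<notin> {V1, V2}"
  shows "mdegree M W = mdegree H W"
proof -
  have "{E \<in> arcs M. W \<in> ends M E} = {E \<in> arcs H. W \<in> ends H E}"
  proof
    show "{E \<in> arcs M. W \<in> ends M E} \<subseteq> {E \<in> arcs H. W \<in> ends H E}"
      using W(2) by (auto simp: arcsM endsM split: if_splits)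
  next
    show "{E \<in> arcs H. W \<in> ends H E} \<subseteq> {E \<in> arcs M. W \<in> ends M E}"
    proof
      fix E assume "E \<in> {E \<in> arcs H. W \<in> ends H E}"
      hence E: "E \<in> arcs H" "W \<in> ends H E" by auto
      have "E \<inter> C = {}" using Mnode_arcs[OF W E] .
      moreover have "E \<noteq> C" using calculation C_ne by auto
      ultimately show "E \<in> {E \<in> arcs M. W \<in> ends M E}" using E by (simp add: arcsM endsM)
    qed
  qed
  thus ?thesis by (simp add: mdegree_def)
qed

lemma atV1: "{E \<in> arcs M. V1 \<in> ends M E} = insert C {E \<in> arcs H. E \<inter> C = {} \<and> V1 \<in> ends H E}"
proof -
  have "E \<noteq> C" if "E \<inter> C = {}" for E using that C_ne by auto
  thus ?thesis by (auto simp: arcsM endsM)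
qed

lemma finite_arcsH: "finite (arcs H)" using net_D2[OF net] .

lemma leaf_V1: "V1 \<in> leaf_nodes M \<longleftrightarrow> V1 \<in> leaf_nodes H"
proof -
  define SV where "SV = {E \<in> arcs H. E \<inter> C = {} \<and> V1 \<in> ends H E}"
  have fSV: "finite SV" using finite_arcsH SV_def by auto
  have CSV: "C \<notin> SV" using C_ne SV_def by auto
  have dM: "mdegree M V1 = Suc (card SV)" unfolding mdegree_def atV1 SV_def[symmetric]
    using fSV CSV by simp
  show ?thesis
  proof
    assume "V1 \<in> leaf_nodes M"
    hence "mdegree M V1 = 1" by (simp add: leaf_nodes_def)
    hence SV0: "SV = {}" using dM fSV by simp
    show "V1 \<in> leaf_nodes H"
    proof (rule ccontr)
      assume nl: "V1 \<notin> leaf_nodes H"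
      have "card (leaf_nodes H) = 3" using net_D11[OF net] .
      moreover have "card {V1, V2} \<le> 2" by (cases "V1 = V2") auto
      ultimately have "\<not> leaf_nodes H \<subseteq> {V1, V2}"
        using card_mono[of "{V1, V2}" "leaf_nodes H"] by auto
      then obtain L where L: "L \<in> leaf_nodes H" "L \<notin> {V1, V2}" by blast
      have LH: "L \<in> nodes H" using L leaf_nodes_sub by blast
      have conn: "mconnected (nodes H - {V2}) (nabla_edges H) (nabla_ends H)"
        using net_D7[OF net] V12 unfolding mbiconnected_def by blast
      define In where "In = Inner \<union> {V1}"
      have a1: "V1 \<in> nodes H - {V2}" "V1 \<in> In" using V12 In_def by auto
      have b1: "L \<in> nodes H - {V2}" "L \<notin> In" using LH L D2[OF L(1)] In_def by auto
      from partition_edge[OF conn a1 b1]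
      obtain e x y where exy: "e \<in> nabla_edges H" "x \<in> nodes H - {V2}" "x \<in> In"
        "y \<in> nodes H - {V2}" "y \<notin> In" "nabla_ends H e = {x, y}"
        by (elim bexE exE conjE) (rule that)
      have yV: "y \<noteq> V1" "y \<noteq> V2" "y \<notin> Inner" using exy In_def by auto
      show False
      proof (cases "x \<in> Inner")
        case True
        then obtain F where F: "F \<in> AS" "e = ArcE F" using inner_in[OF True exy(1)] exy(6) by auto
        hence "y \<in> ends H F" using exy(6) by simp
        thus False using F yV by blast
      next
        case False
        hence xV: "x = V1" using exy(3) In_def by auto
        from exy(1) consider (arc) F where "e = ArcE F" "F \<in> arcs H"
          | (leaf) L1 L2 where "e = LeafE {L1, L2}" "L1 \<in> leaf_nodes H" "L2 \<in> leaf_nodes H"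
          unfolding nabla_edges_def by blast
        then show False
        proof cases
          case arc
          have ends: "ends H F = {V1, y}" using arc exy(6) xV by simp
          show False
          proof (cases "F \<in> AS")
            case True thus False using ends yV by blast
          next
            case False
            hence "F \<inter> C = {}" using surv_iff arc by blast
            hence "F \<in> SV" using arc ends SV_def by auto
            thus False using SV0 by simp
          qed
        next
          case leaf
          hence "V1 \<in> {L1, L2}" using exy(6) xV by auto
          thus False using leaf nl by auto
        qed
      qed
    qed
  next
    assume L: "V1 \<in> leaf_nodes H"
    hence d1: "mdegree H V1 = 1" by (simp add: leaf_nodes_def)
    obtain F where F: "F \<in> AS" "V1 \<in> ends H F" using V1_inc by blast
    have FH: "F \<in> arcs H" using F AS_arcs by blast
    have "SV = {}"
    proof (rule ccontr)
      assume "SV \<noteq> {}"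
      then obtain E where E: "E \<in> SV" by blast
      have "E \<noteq> F" using E F SV_def surv_iff FH by auto
      moreover have "{E, F} \<subseteq> {E \<in> arcs H. V1 \<in> ends H E}" using E F FH SV_def by auto
      moreover have "finite {E \<in> arcs H. V1 \<in> ends H E}" using finite_arcsH by auto
      ultimately have "2 \<le> mdegree H V1" unfolding mdegree_def
        by (metis card_2_iff card_mono)
      thus False using d1 by simp
    qed
    hence "mdegree M V1 = 1" using dM by simp
    thus "V1 \<in> leaf_nodes M" using V12M by (simp add: leaf_nodes_def)
  qed
qed

lemma leaf_V2: "V2 \<in> leaf_nodes M \<longleftrightarrow> V2 \<in> leaf_nodes H"
  using chunk.leaf_V1[OF swapped] merge_sym by metis

lemma leaves_eq: "leaf_nodes M = leaf_nodes H"
proof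
  show "leaf_nodes M \<subseteq> leaf_nodes H"
  proof
    fix L assume L: "L \<in> leaf_nodes M"
    show "L \<in> leaf_nodes H"
    proof (cases "L \<in> {V1, V2}")
      case True then show ?thesis using L leaf_V1 leaf_V2 by auto
    next
      case False
      have LM: "L \<in> nodes M" using L by (simp add: leaf_nodes_def)
      then show ?thesis using L deg_other[OF LM False] nodesM_sub by (auto simp: leaf_nodes_def)
    qed
  qed
next
  show "leaf_nodes H \<subseteq> leaf_nodes M"
  proof
    fix L assume L: "L \<in> leaf_nodes H"
    show "L \<in> leaf_nodes M"
    proof (cases "L \<in> {V1, V2}")
      case True then show ?thesis using L leaf_V1 leaf_V2 by auto
    next
      case False
      have LM: "L \<in> nodes M" using leaf_M[OF L] .
      then show ?thesis using L deg_other[OF LM False] by (auto simp: leaf_nodes_def)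
    qed
  qed
qed

end

context chunk
begin

lemma phi_M:
  assumes "T \<in> {V1, V2}"
  shows "(if x \<in> nodes M then x else T) \<in> nodes M"
  using assms V12M by auto

lemma arc_core:
  assumes T: "T \<in> {V1, V2}" and F: "F \<in> arcs H" "ends H F = {x, y}"
  defines "\<phi> \<equiv> (\<lambda>W. if W \<in> nodes M then W else T)"
  shows "\<phi> x = \<phi> y \<or> (\<exists>E\<in>arcs M. ends M E = {\<phi> x, \<phi> y})"
proof (cases "F \<in> AS")
  case False
  hence surv: "F \<inter> C = {}" using surv_iff F by blast
  hence xy: "x \<in> nodes M" "y \<in> nodes M" using surv_ends_M[OF F(1)] F(2) by auto
  have "F \<in> arcs M" "F \<noteq> C" using surv F C_ne by (auto simp: arcsM)
  hence "ends M F = {\<phi> x, \<phi> y}" using xy F(2) \<phi>_def by (simp add: endsM)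
  thus ?thesis using \<open>F \<in> arcs M\<close> by blast
next
  case True
  have px: "\<phi> z \<in> {V1, V2}" if "z \<in> ends H F" for z
  proof (cases "z \<in> nodes M")
    case True
    hence "z \<notin> Inner" using D1 by blast
    hence "z \<in> {V1, V2}" using \<open>F \<in> AS\<close> that by blast
    then show ?thesis using True \<phi>_def by simp
  next
    case False then show ?thesis using T \<phi>_def by simp
  qed
  have "\<phi> x \<in> {V1, V2}" "\<phi> y \<in> {V1, V2}" using px F(2) by auto
  moreover have "C \<in> arcs M" "ends M C = {V1, V2}" by (auto simp: arcsM endsM)
  ultimately show ?thesis by (metis empty_iff insertE insert_commute)
qed

lemma arc_step:
  assumes T: "T \<in> {V1, V2}" and m: "madj (nodes H) (arcs H) (ends H) x y"
  defines "\<phi> \<equiv> (\<lambda>W. if W \<in> nodes M then W else T)"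
  shows "\<phi> x = \<phi> y \<or> madj (nodes M) (arcs M) (ends M) (\<phi> x) (\<phi> y)"
proof -
  obtain F where F: "F \<in> arcs H" "ends H F = {x, y}" using m by (auto simp: madj_def)
  have pM: "\<phi> x \<in> nodes M" "\<phi> y \<in> nodes M" using phi_M[OF T] \<phi>_def by auto
  have c: "\<phi> x = \<phi> y \<or> (\<exists>E\<in>arcs M. ends M E = {\<phi> x, \<phi> y})"
    using arc_core[OF T F] unfolding \<phi>_def .
  show ?thesis
  proof (cases "\<phi> x = \<phi> y")
    case True then show ?thesis by simp
  next
    case False
    hence "madj (nodes M) (arcs M) (ends M) (\<phi> x) (\<phi> y)" unfolding madj_def using pM c by blast
    then show ?thesis by simp
  qed
qed

lemma nabla_step:
  assumes T: "T \<in> {V1, V2}" "T \<notin> D" and m: "madj (nodes H - D) (nabla_edges H) (nabla_ends H) x y"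
  defines "\<phi> \<equiv> (\<lambda>W. if W \<in> nodes M then W else T)"
  shows "\<phi> x = \<phi> y \<or> madj (nodes M - D) (nabla_edges M) (nabla_ends M) (\<phi> x) (\<phi> y)"
proof -
  obtain e where e: "e \<in> nabla_edges H" "nabla_ends H e = {x, y}" and xy: "x \<in> nodes H - D" "y \<in> nodes H - D"
    "x \<noteq> y" using m by (auto simp: madj_def)
  have pM: "\<phi> x \<in> nodes M - D" "\<phi> y \<in> nodes M - D" using phi_M[OF T(1)] \<phi>_def T(2) xy by auto
  from e(1) consider (arc) F where "e = ArcE F" "F \<in> arcs H"
    | (leaf) L1 L2 where "e = LeafE {L1, L2}" "L1 \<in> leaf_nodes H" "L2 \<in> leaf_nodes H" "L1 \<noteq> L2"
    unfolding nabla_edges_def by blast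
  then show ?thesis
  proof cases
    case arc
    have c: "\<phi> x = \<phi> y \<or> (\<exists>E\<in>arcs M. ends M E = {\<phi> x, \<phi> y})"
      using arc_core[OF T(1) arc(2)] e(2) arc(1) unfolding \<phi>_def by simp
    have ae: "ArcE E \<in> nabla_edges M" if "E \<in> arcs M" for E using that by (simp add: nabla_edges_def)
    show ?thesis
    proof (cases "\<phi> x = \<phi> y")
      case True then show ?thesis by simp
    next
      case False
      then obtain E where "E \<in> arcs M" "ends M E = {\<phi> x, \<phi> y}" using c by blast
      hence "ArcE E \<in> nabla_edges M" "nabla_ends M (ArcE E) = {\<phi> x, \<phi> y}" using ae by auto
      hence "madj (nodes M - D) (nabla_edges M) (nabla_ends M) (\<phi> x) (\<phi> y)"
        unfolding madj_def using pM False by blast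
      then show ?thesis by simp
    qed
  next
    case leaf
    have "{L1, L2} = {x, y}" using leaf e(2) by simp
    hence lx: "x \<in> leaf_nodes M" "y \<in> leaf_nodes M" using leaf leaves_eq by auto
    hence "x \<in> nodes M" "y \<in> nodes M" using leaf_nodes_sub by auto
    hence "\<phi> x = x" "\<phi> y = y" using \<phi>_def by auto
    moreover have "LeafE {x, y} \<in> nabla_edges M" using lx xy(3) unfolding nabla_edges_def by blast
    ultimately show ?thesis using pM xy(3) unfolding madj_def by (metis nabla_ends.simps(2))
  qed
qed

lemma M_conn: "mconnected (nodes M) (arcs M) (ends M)"
  unfolding mconnected_def
proof (intro ballI)
  fix a b assume ab: "a \<in> nodes M" "b \<in> nodes M"
  let ?\<phi> = "\<lambda>W. if W \<in> nodes M then W else V1"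
  have "(madj (nodes H) (arcs H) (ends H))\<^sup>*\<^sup>* a b"
    using net_D6[OF net] ab nodesM_sub unfolding mconnected_def by blast
  hence "(madj (nodes M) (arcs M) (ends M))\<^sup>*\<^sup>* (?\<phi> a) (?\<phi> b)"
    by (rule conn_map) (rule arc_step, simp)
  thus "(madj (nodes M) (arcs M) (ends M))\<^sup>*\<^sup>* a b" using ab by simp
qed

lemma M_conn_nabla:
  assumes D: "D = {} \<or> (\<exists>v. D = {v})" and HD: "mconnected (nodes H - D) (nabla_edges H) (nabla_ends H)"
  shows "mconnected (nodes M - D) (nabla_edges M) (nabla_ends M)"
  unfolding mconnected_def
proof (intro ballI)
  fix a b assume ab: "a \<in> nodes M - D" "b \<in> nodes M - D"
  define T where "T = (if V1 \<in> D then V2 else V1)"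
  have T: "T \<in> {V1, V2}" "T \<notin> D" using D V12(1) T_def by auto
  let ?\<phi> = "\<lambda>W. if W \<in> nodes M then W else T"
  have "(madj (nodes H - D) (nabla_edges H) (nabla_ends H))\<^sup>*\<^sup>* a b"
    using HD ab nodesM_sub unfolding mconnected_def by blast
  hence "(madj (nodes M - D) (nabla_edges M) (nabla_ends M))\<^sup>*\<^sup>* (?\<phi> a) (?\<phi> b)"
    by (rule conn_map) (rule nabla_step[OF T])
  thus "(madj (nodes M - D) (nabla_edges M) (nabla_ends M))\<^sup>*\<^sup>* a b" using ab by simp
qed

lemma M_biconn: "mbiconnected (nodes M) (nabla_edges M) (nabla_ends M)"
proof -
  have H: "mconnected (nodes H) (nabla_edges H) (nabla_ends H)"
    "\<forall>v\<in>nodes H. mconnected (nodes H - {v}) (nabla_edges H) (nabla_ends H)"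
    using net_D7[OF net] unfolding mbiconnected_def by auto
  have "mconnected (nodes M - {}) (nabla_edges M) (nabla_ends M)"
    using M_conn_nabla[of "{}"] H(1) by simp
  moreover have "mconnected (nodes M - {v}) (nabla_edges M) (nabla_ends M)" if "v \<in> nodes M" for v
    using M_conn_nabla[of "{v}"] H(2) that nodesM_sub by blast
  ultimately show ?thesis unfolding mbiconnected_def by simp
qed

lemma hp_all:
  assumes E0: "E0 \<in> AS" shows "HP H AS V1 V2 E0"
proof -
  obtain A where A: "A \<in> S" "E0 \<in> A" using E0 by blast
  have AAS: "A \<subseteq> AS" using A by blast
  show ?thesis using sc_cases[OF A(1)]
  proof
    assume "\<exists>E\<in>arcs H. A = {E} \<and> ends H E = {V1, V2}"
    then obtain E where E: "A = {E}" "ends H E = {V1, V2}" by blast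
    have "ARel H AS V1 V2" using E A unfolding ARel_def by blast
    hence "is_path (ARel H AS) [V1, V2]" using V12(1) by (simp add: is_path_Cons)
    moreover have "ends H E0 = {[V1, V2] ! 0, [V1, V2] ! Suc 0}" using E A by simp
    ultimately show ?thesis unfolding HP_def
      by (intro exI[of _ "[V1, V2]"]) auto
  next
    assume "\<exists>N' Ed'. comp Eg X H V1 V2 N' Ed' \<and> A = {E. ArcE E \<in> Ed'}"
    then obtain N' Ed' where c: "comp Eg X H V1 V2 N' Ed'" "A = {E. ArcE E \<in> Ed'}" by blast
    have "HP H A V1 V2 E0" using comp.hpath[OF c(1)] A(2) c(2) by blast
    thus ?thesis using HP_mono AAS by blast
  qed
qed

lemma N4_C:
  assumes "{V1, V2} = {U, V}" "x \<in> C"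
  shows "\<exists>P. uv_rung Eg C U V P \<and> x \<in> set P"
proof -
  obtain E0 where E0: "E0 \<in> AS" "x \<in> E0" using assms(2) Cdef by blast
  obtain Ws j where W: "is_path (ARel H AS) Ws" "hd Ws = V1" "last Ws = V2" "Suc j < length Ws"
    "ends H E0 = {Ws ! j, Ws ! Suc j}" using hp_all[OF E0(1)] unfolding HP_def by blast
  obtain P where P: "uv_rung Eg (\<Union>AS) V1 V2 P" "x \<in> set P"
    using rung_through[OF net sym AS_arcs W(1) W(4) E0(1) W(5) E0(2)] W(2,3) by auto
  have P': "uv_rung Eg C V1 V2 P" using P(1) Cdef by simp
  have "(U = V1 \<and> V = V2) \<or> (U = V2 \<and> V = V1)" using assms(1) V12(1) by (metis doubleton_eq_iff)
  thus ?thesis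
  proof
    assume "U = V1 \<and> V = V2" thus ?thesis using P' P(2) by blast
  next
    assume "U = V2 \<and> V = V1"
    moreover have "uv_rung Eg C V2 V1 (rev P)" using rung_rev[OF P'] sym by blast
    ultimately show ?thesis using P(2) by auto
  qed
qed

lemma V2_inc: "\<exists>F\<in>AS. V2 \<in> ends H F"
  using chunk.V1_inc[OF swapped] .

lemma common_ends:
  assumes E0: "E0 \<in> AS" and F: "F \<in> arcs H" "F \<inter> C = {}" "V \<in> ends H F" and w: "w \<in> E0" "w \<in> V"
  shows "V \<in> ends H E0 \<longleftrightarrow> V \<in> {V1, V2}"
proof
  assume "V \<in> ends H E0"
  moreover have "V \<in> nodes M" using surv_ends_M[OF F(1,2)] F(3) by blast
  hence "V \<notin> Inner" using D1 by blast
  ultimately show "V \<in> {V1, V2}" using E0 by blast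
next
  assume "V \<in> {V1, V2}"
  have VH: "V \<in> nodes H" using net_ends[OF net F(1)] F(3) by blast
  have "E0 \<inter> V \<noteq> {}" using w by blast
  thus "V \<in> ends H E0" using net_N5[OF net _ VH] E0 AS_arcs by blast
qed

lemma M_net: "is_net Eg X M"
proof -
  have fin: "finite (nodes M)" "finite (arcs M)"
    using net_D1[OF net] net_D2[OF net] nodesM_sub finite_subset arcsM by auto
  have nX: "\<forall>V\<in>nodes M. V \<subseteq> X" using net_D3[OF net] nodesM_sub by blast
  have CX: "C \<subseteq> X" using Cdef AS_arcs net_D10[OF net] by blast
  have aX: "\<forall>E\<in>arcs M. E \<subseteq> X" using net_D4[OF net] CX by (auto simp: arcsM)
  have ends: "\<forall>E\<in>arcs M. ends M E \<subseteq> nodes M \<and> card (ends M E) = 2"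
  proof
    fix E assume E: "E \<in> arcs M"
    show "ends M E \<subseteq> nodes M \<and> card (ends M E) = 2"
    proof (cases "E = C")
      case True then show ?thesis using V12M V12(1) by (simp add: endsM)
    next
      case False
      hence "E \<in> arcs H" "E \<inter> C = {}" using E by (auto simp: arcsM)
      then show ?thesis using surv_ends_M net_ends[OF net] False by (simp add: endsM)
    qed
  qed
  have ne: "\<forall>E\<in>arcs M. E \<noteq> {}" using net_D8[OF net] C_ne by (auto simp: arcsM)
  have disj: "\<forall>E\<in>arcs M. \<forall>F\<in>arcs M. E \<noteq> F \<longrightarrow> E \<inter> F = {}"
    using net_D9[OF net] by (auto simp: arcsM)
  have un: "\<Union>(arcs M) = X"
  proof
    show "\<Union>(arcs M) \<subseteq> X" using aX by blast
  next
    show "X \<subseteq> \<Union>(arcs M)"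
    proof
      fix x assume "x \<in> X"
      then obtain E where E: "E \<in> arcs H" "x \<in> E" using net_D10[OF net] by blast
      show "x \<in> \<Union>(arcs M)"
      proof (cases "E \<inter> C = {}")
        case True then show ?thesis using E by (auto simp: arcsM)
      next
        case False
        hence "E \<in> AS" using surv_iff E by blast
        hence "x \<in> C" using E Cdef by blast
        then show ?thesis by (auto simp: arcsM)
      qed
    qed
  qed
  have l1: "card (leaf_nodes M) = 3" using net_D11[OF net] leaves_eq by simp
  have l2: "\<forall>L\<in>leaf_nodes M. \<exists>v. L = {v} \<and> g_leaf Eg v" using net_D12[OF net] leaves_eq by simp
  have n4: "\<forall>E\<in>arcs M. \<forall>U V. ends M E = {U, V} \<longrightarrow> (\<forall>x\<in>E. \<exists>P. uv_rung Eg E U V P \<and> x \<in> set P)"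
  proof (intro ballI allI impI)
    fix E U V x assume E: "E \<in> arcs M" and UV: "ends M E = {U, V}" and x: "x \<in> E"
    show "\<exists>P. uv_rung Eg E U V P \<and> x \<in> set P"
    proof (cases "E = C")
      case True then show ?thesis using N4_C UV x by (simp add: endsM)
    next
      case False
      hence EH: "E \<in> arcs H" "ends H E = {U, V}" using E UV by (auto simp: arcsM endsM)
      show ?thesis using net_N4[OF net EH x] .
    qed
  qed
  have n5: "\<forall>E\<in>arcs M. \<forall>V\<in>nodes M. E \<inter> V \<noteq> {} \<longleftrightarrow> V \<in> ends M E"
  proof (intro ballI)
    fix E V assume E: "E \<in> arcs M" and V: "V \<in> nodes M"
    have VH: "V \<in> nodes H" using V nodesM_sub by blast
    show "E \<inter> V \<noteq> {} \<longleftrightarrow> V \<in> ends M E"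
    proof (cases "E = C")
      case True
      have "C \<inter> V \<noteq> {} \<longleftrightarrow> V \<in> {V1, V2}"
      proof
        assume "C \<inter> V \<noteq> {}"
        then obtain F where F: "F \<in> AS" "F \<inter> V \<noteq> {}" using Cdef by blast
        hence "V \<in> ends H F" using net_N5[OF net _ VH] AS_arcs by blast
        moreover have "V \<notin> Inner" using D1 V by blast
        ultimately show "V \<in> {V1, V2}" using F by blast
      next
        assume "V \<in> {V1, V2}"
        then obtain F where F: "F \<in> AS" "V \<in> ends H F" using V1_inc V2_inc by blast
        hence "F \<inter> V \<noteq> {}" using net_N5[OF net _ VH] AS_arcs by blast
        thus "C \<inter> V \<noteq> {}" using F Cdef by blast
      qed
      then show ?thesis using True by (simp add: endsM)
    next
      case False
      hence "E \<in> arcs H" using E by (auto simp: arcsM)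
      then show ?thesis using net_N5[OF net _ VH] False by (simp add: endsM)
    qed
  qed
  have n6: "\<forall>E\<in>arcs M. \<forall>F\<in>arcs M. \<forall>u v. E \<noteq> F \<and> u \<in> E \<and> v \<in> F \<longrightarrow>
        (Eg u v \<longleftrightarrow> (\<exists>V \<in> ends M E \<inter> ends M F. u \<in> V \<and> v \<in> V))"
  proof (intro ballI allI impI)
    fix E F u v assume E: "E \<in> arcs M" and F: "F \<in> arcs M" and uv: "E \<noteq> F \<and> u \<in> E \<and> v \<in> F"
    show "Eg u v \<longleftrightarrow> (\<exists>V \<in> ends M E \<inter> ends M F. u \<in> V \<and> v \<in> V)"
    proof (cases "E = C")
      case EC: True
      hence FC: "F \<noteq> C" using uv by blast
      hence Fs: "F \<in> arcs H" "F \<inter> C = {}" using F by (auto simp: arcsM)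
      obtain E0 where E0: "E0 \<in> AS" "u \<in> E0" using uv EC Cdef by blast
      have E0F: "E0 \<noteq> F" using E0 Fs surv_iff by blast
      have "Eg u v \<longleftrightarrow> (\<exists>V \<in> ends H E0 \<inter> ends H F. u \<in> V \<and> v \<in> V)"
        using net_N6[OF net _ Fs(1) E0F E0(2)] E0(1) AS_arcs uv by blast
      also have "\<dots> \<longleftrightarrow> (\<exists>V \<in> {V1, V2} \<inter> ends H F. u \<in> V \<and> v \<in> V)"
        using common_ends[OF E0(1) Fs] E0(2) by blast
      finally show ?thesis using EC FC by (simp add: endsM)
    next
      case EC: False
      hence Es: "E \<in> arcs H" "E \<inter> C = {}" using E by (auto simp: arcsM)
      show ?thesis
      proof (cases "F = C")
        case FC: True
        obtain F0 where F0: "F0 \<in> AS" "v \<in> F0" using uv FC Cdef by blast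
        have EF0: "E \<noteq> F0" using F0 Es surv_iff by blast
        have "Eg u v \<longleftrightarrow> (\<exists>V \<in> ends H E \<inter> ends H F0. u \<in> V \<and> v \<in> V)"
          using net_N6[OF net Es(1) _ EF0 _ F0(2)] F0(1) AS_arcs uv by blast
        also have "\<dots> \<longleftrightarrow> (\<exists>V \<in> ends H E \<inter> {V1, V2}. u \<in> V \<and> v \<in> V)"
          using common_ends[OF F0(1) Es] F0(2) by blast
        finally show ?thesis using EC FC by (simp add: endsM)
      next
        case FC: False
        hence "F \<in> arcs H" using F by (auto simp: arcsM)
        then show ?thesis using net_N6[OF net Es(1)] uv EC FC by (simp add: endsM)
      qed
    qed
  qed
  show ?thesis unfolding is_net_def
    using fin nX aX ends M_conn M_biconn ne disj un l1 l2 n4 n5 n6 by blast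
qed

end

theorem lemma3p4:
  fixes Vg :: "'a set" and Eg :: "'a \<Rightarrow> 'a \<Rightarrow> bool"
    and X :: "'a set" and H :: "'a mgraph" and V1 V2 C :: "'a set"
  assumes "simple_graph Vg Eg"
    and "X \<subseteq> Vg"
    and "is_net Eg X H"
    and "is_chunk H V1 V2 C"
  shows "is_net Eg X (merge H V1 V2 C)"
proof -
  obtain S where S: "S \<noteq> {}" "\<forall>A\<in>S. split_component H A {V1, V2}" "C = \<Union>(\<Union>S)"
    using assms(4) unfolding is_chunk_def by blast
  interpret chunk Vg Eg X H V1 V2 C S using assms(1,3) S by unfold_locales
  show ?thesis by (rule M_net)
qed

end
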